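(* Let $\lambda\in(0,1)$ and $T\ge0$. Then $$\|\tilde V^1_\lambda-\tilde V^1_{\lambda,T+1}\|_{\sup}\le(1-\lambda)\|\tilde V^1_\lambda-\tilde V^1_{\lambda,T}\|_{\sup},\qquad \|\tilde V^2_\lambda-\tilde V^2_{\lambda,T+1}\|_{\sup}\le(1-\lambda)\|\tilde V^2_\lambda-\tilde V^2_{\lambda,T}\|_{\sup}.$$
   Context: Setting: nonempty finite type sets $K,L$, action sets $A,B$, payoff $M:K\times L\times A\times B\to\mathbb R$; players choose actions simultaneously each stage, actions are publicly announced, strategies may depend on own type and both action histories. Discounted type-1 dual game $\tilde\Gamma^1_\lambda(\mu,q)$ ($\mu\in\mathbb R^{|K|}$, $q\in\Delta(L)$): player 1 chooses his own type $k$ (by a distribution of his choice, unknown to player 2), nature draws $l\sim q$ and tells only player 2, infinitely many stages are played, and player 1 (maximizer) receives $\mathbb E[\mu^k+\sum_{t\ge1}\lambda(1-\lambda)^{t-1}M(k,l,a_t,b_t)]$; value $\tilde V^1_\lambda(\mu,q)$. Discounted type-2 dual game $\tilde\Gamma^2_\lambda(p,\nu)$ ($p\in\Delta(K)$, $\nu\in\mathbb R^{|L|}$): $k\sim p$ drawn by nature and told to player 1, player 2 chooses $l$ himself, payoff $\mathbb E[\nu^l+\sum_{t\ge1}\lambda(1-\lambda)^{t-1}M]$; value $\tilde V^2_\lambda(p,\nu)$. The truncated versions $\tilde\Gamma^1_{\lambda,T},\tilde\Gamma^2_{\lambda,T}$ are the same games with the sum over $t=1,\dots,T$ only; values $\tilde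 V^1_{\lambda,T}(\mu,q)$, $\tilde V^2_{\lambda,T}(p,\nu)$, with $\tilde V^1_{\lambda,0}(\mu,q)=\max_k\mu^k$ and $\tilde V^2_{\lambda,0}(p,\nu)=\min_l\nu^l$. $\|f\|_{\sup}=\sup_{x}|f(x)|$ over the domain ($\mathbb R^{|K|}\times\Delta(L)$, resp. $\Delta(K)\times\mathbb R^{|L|}$). *)

theory Defs
  imports "HOL-Probability.Probability_Mass_Function"
begin

text \<open>Finite histories of the repeated game: lists of (action of player 1, action of player 2).
  A behaviour strategy of a player of a fixed type maps each history to a mixed action.\<close>

definition hist_prob :: "(('a \<times> 'b) list \<Rightarrow> 'a pmf) \<Rightarrow> (('a \<times> 'b) list \<Rightarrow> 'b pmf) \<Rightarrow> ('a \<times> 'b) list \<Rightarrow> real" where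
  "hist_prob s t h = (\<Prod>i<length h. pmf (s (take i h)) (fst (h ! i)) * pmf (t (take i h)) (snd (h ! i)))"

text \<open>Expected payoff at stage n+1 (n = length of the preceding history).\<close>
definition stage_payoff :: "('a::finite \<Rightarrow> 'b::finite \<Rightarrow> real) \<Rightarrow> (('a \<times> 'b) list \<Rightarrow> 'a pmf) \<Rightarrow> (('a \<times> 'b) list \<Rightarrow> 'b pmf) \<Rightarrow> nat \<Rightarrow> real" where
  "stage_payoff g s t n =
     (\<Sum>h\<in>{h. length h = n}. hist_prob s t h *
        (\<Sum>a\<in>UNIV. \<Sum>b\<in>UNIV. pmf (s h) a * pmf (t h) b * g a b))"

definition disc_total :: "real \<Rightarrow> (nat \<Rightarrow> real) \<Rightarrow> real" where
  "disc_total lam f = (\<Sum>n. lam * (1 - lam) ^ n * f n)"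

definition trunc_total :: "real \<Rightarrow> nat \<Rightarrow> (nat \<Rightarrow> real) \<Rightarrow> real" where
  "trunc_total lam T f = (\<Sum>n<T. lam * (1 - lam) ^ n * f n)"

text \<open>Type-1 dual game: player 1 picks pi in Delta(K) and sigma; nature draws l ~ q (told to 2).\<close>
definition dual1_payoff ::
  "((nat \<Rightarrow> real) \<Rightarrow> real) \<Rightarrow> ('k::finite \<Rightarrow> 'l::finite \<Rightarrow> 'a::finite \<Rightarrow> 'b::finite \<Rightarrow> real)
   \<Rightarrow> ('k \<Rightarrow> real) \<Rightarrow> 'l pmf \<Rightarrow> 'k pmf \<Rightarrow> ('k \<Rightarrow> ('a \<times> 'b) list \<Rightarrow> 'a pmf)
   \<Rightarrow> ('l \<Rightarrow> ('a \<times> 'b) list \<Rightarrow> 'b pmf) \<Rightarrow> real" where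
  "dual1_payoff W M \<mu> q \<pi> \<sigma> \<tau> =
     (\<Sum>k\<in>UNIV. pmf \<pi> k * (\<mu> k + (\<Sum>l\<in>UNIV. pmf q l * W (stage_payoff (M k l) (\<sigma> k) (\<tau> l)))))"

definition dual1_val where
  "dual1_val W M \<mu> q = (SUP (\<pi>, \<sigma>)\<in>UNIV. INF \<tau>\<in>UNIV. dual1_payoff W M \<mu> q \<pi> \<sigma> \<tau>)"

definition V1 where "V1 lam M \<mu> q = dual1_val (disc_total lam) M \<mu> q"
definition V1T where "V1T lam T M \<mu> q = dual1_val (trunc_total lam T) M \<mu> q"

text \<open>Type-2 dual game: k ~ p told to player 1; player 2 picks rho in Delta(L) and tau.\<close>
definition dual2_payoff ::
  "((nat \<Rightarrow> real) \<Rightarrow> real) \<Rightarrow> ('k::finite \<Rightarrow> 'l::finite \<Rightarrow> 'a::finite \<Rightarrow> 'b::finite \<Rightarrow> real)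
   \<Rightarrow> 'k pmf \<Rightarrow> ('l \<Rightarrow> real) \<Rightarrow> ('k \<Rightarrow> ('a \<times> 'b) list \<Rightarrow> 'a pmf)
   \<Rightarrow> 'l pmf \<Rightarrow> ('l \<Rightarrow> ('a \<times> 'b) list \<Rightarrow> 'b pmf) \<Rightarrow> real" where
  "dual2_payoff W M p \<nu> \<sigma> \<rho> \<tau> =
     (\<Sum>l\<in>UNIV. pmf \<rho> l * (\<nu> l + (\<Sum>k\<in>UNIV. pmf p k * W (stage_payoff (M k l) (\<sigma> k) (\<tau> l)))))"

definition dual2_val where
  "dual2_val W M p \<nu> = (SUP \<sigma>\<in>UNIV. INF (\<rho>, \<tau>)\<in>UNIV. dual2_payoff W M p \<nu> \<sigma> \<rho> \<tau>)"

definition V2 where "V2 lam M p \<nu> = dual2_val (disc_total lam) M p \<nu>"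
definition V2T where "V2T lam T M p \<nu> = dual2_val (trunc_total lam T) M p \<nu>"

definition supnorm :: "('x \<Rightarrow> 'y \<Rightarrow> real) \<Rightarrow> real" where
  "supnorm f = (SUP (x, y)\<in>UNIV. \<bar>f x y\<bar>)"

end

theory Submission
  imports Defs "HOL-Analysis.Analysis"
begin

lemma simplex_pmf:
  fixes f :: "'x::finite \<Rightarrow> real"
  assumes "\<And>x. f x \<ge> 0" "sum f UNIV = 1"
  shows "\<exists>\<pi>. pmf \<pi> = f"
proof -
  have "(\<integral>\<^sup>+x. ennreal (f x) \<partial>count_space UNIV) = (\<Sum>x\<in>UNIV. ennreal (f x))"
    by (simp add: nn_integral_count_space_finite)
  also have "\<dots> = ennreal (sum f UNIV)" using assms(1) by (simp add: sum_ennreal)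
  finally have "(\<integral>\<^sup>+x. ennreal (f x) \<partial>count_space UNIV) = 1" using assms(2) by simp
  then show ?thesis using pmf_embed_pmf[of f] assms(1) by blast
qed

lemma sum_pmf_UNIV: "(\<Sum>x\<in>(UNIV::'x::finite set). pmf p x) = 1"
  by (rule sum_pmf_eq_1) auto

definition shiftS :: "('c \<times> 'd) \<Rightarrow> (('c \<times> 'd) list \<Rightarrow> 'e) \<Rightarrow> ('c \<times> 'd) list \<Rightarrow> 'e" where
  "shiftS x s = (\<lambda>h. s (x # h))"

lemma hist_prob_Cons:
  "hist_prob s t (x # h) = pmf (s []) (fst x) * pmf (t []) (snd x) * hist_prob (shiftS x s) (shiftS x t) h"
  unfolding hist_prob_def shiftS_def
  by (subst length_Cons, subst prod.lessThan_Suc_shift) (simp add: mult.assoc)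

lemma stage_payoff_0:
  "stage_payoff g s t 0 = (\<Sum>a\<in>UNIV. \<Sum>b\<in>UNIV. pmf (s []) a * pmf (t []) b * g a b)"
  unfolding stage_payoff_def by (simp add: hist_prob_def)

lemma stage_payoff_Suc:
  fixes g :: "'a::finite \<Rightarrow> 'b::finite \<Rightarrow> real"
  shows "stage_payoff g s t (Suc n) = (\<Sum>x\<in>UNIV. pmf (s []) (fst x) * pmf (t []) (snd x) *
      stage_payoff g (shiftS x s) (shiftS x t) n)"
proof -
  have fin: "finite {h::('a\<times>'b) list. length h = n}"
    using finite_lists_length_eq[of "UNIV::('a\<times>'b) set" n] by simp
  have eq: "{h::('a\<times>'b) list. length h = Suc n} = (\<lambda>(x,h). x # h) ` (UNIV \<times> {h. length h = n})"
    by (auto simp: length_Suc_conv image_def)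
  have inj: "inj_on (\<lambda>(x::'a\<times>'b,h). x # h) (UNIV \<times> {h. length h = n})"
    by (auto simp: inj_on_def)
  have "stage_payoff g s t (Suc n) = (\<Sum>(x,h)\<in>UNIV \<times> {h. length h = n}.
      hist_prob s t (x#h) * (\<Sum>a\<in>UNIV. \<Sum>b\<in>UNIV. pmf (s (x#h)) a * pmf (t (x#h)) b * g a b))"
    unfolding stage_payoff_def eq by (subst sum.reindex[OF inj]) (simp add: case_prod_beta)
  also have "\<dots> = (\<Sum>x\<in>UNIV. \<Sum>h\<in>{h. length h = n}.
      hist_prob s t (x#h) * (\<Sum>a\<in>UNIV. \<Sum>b\<in>UNIV. pmf (s (x#h)) a * pmf (t (x#h)) b * g a b))"
    by (subst sum.cartesian_product) simp
  also have "\<dots> = (\<Sum>x\<in>UNIV. pmf (s []) (fst x) * pmf (t []) (snd x) *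
      stage_payoff g (shiftS x s) (shiftS x t) n)"
    unfolding stage_payoff_def hist_prob_Cons
    by (simp add: sum_distrib_left mult.assoc shiftS_def)
  finally show ?thesis .
qed

definition gb :: "('a::finite \<Rightarrow> 'b::finite \<Rightarrow> real) \<Rightarrow> real" where
  "gb g = (\<Sum>a\<in>UNIV. \<Sum>b\<in>UNIV. \<bar>g a b\<bar>)"

lemma sum_pair:
  "(\<Sum>x\<in>(UNIV::('a::finite\<times>'b::finite) set). F x) = (\<Sum>a\<in>UNIV. \<Sum>b\<in>UNIV. F (a,b))"
  by (simp add: sum.cartesian_product UNIV_Times_UNIV[symmetric] del: UNIV_Times_UNIV)

lemma sum_pair_prod:
  fixes f :: "'a::finite \<Rightarrow> real" and g :: "'b::finite \<Rightarrow> real"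
  shows "(\<Sum>x\<in>(UNIV::('a::finite\<times>'b::finite) set). f (fst x) * g (snd x)) = (\<Sum>a\<in>UNIV. f a) * (\<Sum>b\<in>UNIV. g b)"
  by (simp add: sum_pair sum_product)

lemma stage_bound:
  fixes g :: "'a::finite \<Rightarrow> 'b::finite \<Rightarrow> real"
  shows "\<bar>stage_payoff g s t n\<bar> \<le> gb g"
proof (induction n arbitrary: s t)
  case 0
  have "\<bar>stage_payoff g s t 0\<bar> \<le> (\<Sum>a\<in>UNIV. \<Sum>b\<in>UNIV. \<bar>pmf (s []) a * pmf (t []) b * g a b\<bar>)"
    unfolding stage_payoff_0 by (rule order_trans[OF sum_abs]) (intro sum_mono sum_abs)
  also have "\<dots> \<le> gb g" unfolding gb_def
  proof (intro sum_mono)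
    fix a b
    have h1: "pmf (s []) a * pmf (t []) b \<le> 1"
      using mult_mono[OF pmf_le_1 pmf_le_1] by (simp add: pmf_nonneg)
    show "\<bar>pmf (s []) a * pmf (t []) b * g a b\<bar> \<le> \<bar>g a b\<bar>"
      using mult_right_mono[OF h1 abs_ge_zero, of "g a b"] by (simp add: abs_mult pmf_nonneg)
  qed
  finally show ?case .
next
  case (Suc n)
  have "\<bar>stage_payoff g s t (Suc n)\<bar> \<le> (\<Sum>x\<in>UNIV. \<bar>pmf (s []) (fst x) * pmf (t []) (snd x) *
      stage_payoff g (shiftS x s) (shiftS x t) n\<bar>)"
    unfolding stage_payoff_Suc by (rule sum_abs)
  also have "\<dots> \<le> (\<Sum>x\<in>UNIV. pmf (s []) (fst x) * pmf (t []) (snd x) * gb g)"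
    by (intro sum_mono) (simp add: abs_mult mult_left_mono Suc.IH)
  also have "\<dots> = gb g"
    using sum_pair_prod[of "pmf (s [])" "pmf (t [])"]
    by (simp add: sum_distrib_right[symmetric] sum_pmf_UNIV)
  finally show ?case .
qed


lemma embed_simplex:
  fixes f :: "'x::finite \<Rightarrow> real"
  assumes "\<And>x. f x \<ge> 0" "sum f UNIV = 1"
  shows "pmf (embed_pmf f) x = f x"
proof -
  have "(\<integral>\<^sup>+x. ennreal (f x) \<partial>count_space UNIV) = (\<Sum>x\<in>UNIV. ennreal (f x))"
    by (simp add: nn_integral_count_space_finite)
  also have "\<dots> = ennreal (sum f UNIV)" using assms(1) by (simp add: sum_ennreal)
  finally have "(\<integral>\<^sup>+x. ennreal (f x) \<partial>count_space UNIV) = 1" using assms(2) by simp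
  then show ?thesis using pmf_embed_pmf[of f] assms(1) by blast
qed

definition mixw :: "real \<Rightarrow> 'a pmf \<Rightarrow> 'a pmf \<Rightarrow> 'a \<Rightarrow> real" where
  "mixw \<alpha> p1 p2 a = (if \<alpha> * pmf p1 a + (1-\<alpha>) * pmf p2 a = 0 then \<alpha>
      else \<alpha> * pmf p1 a / (\<alpha> * pmf p1 a + (1-\<alpha>) * pmf p2 a))"

definition mixP :: "real \<Rightarrow> 'a::finite pmf \<Rightarrow> 'a pmf \<Rightarrow> 'a pmf" where
  "mixP \<alpha> p1 p2 = embed_pmf (\<lambda>x. \<alpha> * pmf p1 x + (1-\<alpha>) * pmf p2 x)"

lemma pmf_mixP:
  assumes "0 \<le> \<alpha>" "\<alpha> \<le> 1"
  shows "pmf (mixP \<alpha> p1 p2) x = \<alpha> * pmf p1 x + (1-\<alpha>) * pmf p2 x"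
  unfolding mixP_def
proof (rule embed_simplex)
  show "\<And>x. 0 \<le> \<alpha> * pmf p1 x + (1 - \<alpha>) * pmf p2 x" using assms by (simp add: pmf_nonneg)
  show "(\<Sum>x\<in>UNIV. \<alpha> * pmf p1 x + (1 - \<alpha>) * pmf p2 x) = 1"
    by (simp add: sum.distrib sum_distrib_left[symmetric] sum_pmf_UNIV)
qed

fun mixS :: "real \<Rightarrow> (('a::finite \<times> 'b) list \<Rightarrow> 'a pmf) \<Rightarrow> (('a \<times> 'b) list \<Rightarrow> 'a pmf) \<Rightarrow> ('a \<times> 'b) list \<Rightarrow> 'a pmf" where
  "mixS \<alpha> s1 s2 [] = mixP \<alpha> (s1 []) (s2 [])"
| "mixS \<alpha> s1 s2 (x # h) = mixS (mixw \<alpha> (s1 []) (s2 []) (fst x)) (shiftS x s1) (shiftS x s2) h"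

lemma mixw_range:
  assumes "0 \<le> \<alpha>" "\<alpha> \<le> 1"
  shows "0 \<le> mixw \<alpha> p1 p2 a \<and> mixw \<alpha> p1 p2 a \<le> 1"
proof -
  have n1: "0 \<le> \<alpha> * pmf p1 a" "0 \<le> (1-\<alpha>) * pmf p2 a" using assms by (auto simp: pmf_nonneg)
  show ?thesis
  proof (cases "\<alpha> * pmf p1 a + (1-\<alpha>) * pmf p2 a = 0")
    case True then show ?thesis using assms unfolding mixw_def by simp
  next
    case False
    then have "\<alpha> * pmf p1 a + (1-\<alpha>) * pmf p2 a > 0" using n1 by linarith
    then show ?thesis using n1 False unfolding mixw_def by (simp add: divide_simps)
  qed
qed

lemma mixw_eq:
  assumes "0 \<le> \<alpha>" "\<alpha> \<le> 1"
  shows "(\<alpha> * pmf p1 a + (1-\<alpha>) * pmf p2 a) * mixw \<alpha> p1 p2 a = \<alpha> * pmf p1 a"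
    and "(\<alpha> * pmf p1 a + (1-\<alpha>) * pmf p2 a) * (1 - mixw \<alpha> p1 p2 a) = (1-\<alpha>) * pmf p2 a"
proof -
  have n1: "0 \<le> \<alpha> * pmf p1 a" "0 \<le> (1-\<alpha>) * pmf p2 a" using assms by (auto simp: pmf_nonneg)
  have "(\<alpha> * pmf p1 a + (1-\<alpha>) * pmf p2 a) * mixw \<alpha> p1 p2 a = \<alpha> * pmf p1 a
     \<and> (\<alpha> * pmf p1 a + (1-\<alpha>) * pmf p2 a) * (1 - mixw \<alpha> p1 p2 a) = (1-\<alpha>) * pmf p2 a"
  proof (cases "\<alpha> * pmf p1 a + (1-\<alpha>) * pmf p2 a = 0")
    case True
    then have "\<alpha> * pmf p1 a = 0" "(1-\<alpha>) * pmf p2 a = 0" using n1 by linarith+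
    then show ?thesis using True by simp
  next
    case False
    then show ?thesis unfolding mixw_def by (simp add: divide_simps algebra_simps)
  qed
  then show "(\<alpha> * pmf p1 a + (1-\<alpha>) * pmf p2 a) * mixw \<alpha> p1 p2 a = \<alpha> * pmf p1 a"
    and "(\<alpha> * pmf p1 a + (1-\<alpha>) * pmf p2 a) * (1 - mixw \<alpha> p1 p2 a) = (1-\<alpha>) * pmf p2 a" by auto
qed

lemma shift_mixS: "shiftS x (mixS \<alpha> s1 s2) = mixS (mixw \<alpha> (s1 []) (s2 []) (fst x)) (shiftS x s1) (shiftS x s2)"
  by (rule ext) (simp add: shiftS_def)

lemma stage_mix:
  fixes g :: "'a::finite \<Rightarrow> 'b::finite \<Rightarrow> real"
  assumes "0 \<le> \<alpha>" "\<alpha> \<le> 1"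
  shows "stage_payoff g (mixS \<alpha> s1 s2) t n = \<alpha> * stage_payoff g s1 t n + (1-\<alpha>) * stage_payoff g s2 t n"
  using assms
proof (induction n arbitrary: \<alpha> s1 s2 t)
  case 0
  then show ?case
    unfolding stage_payoff_0 sum_distrib_left sum.distrib[symmetric]
    by (intro sum.cong refl) (simp add: pmf_mixP algebra_simps)
next
  case (Suc n)
  have "stage_payoff g (mixS \<alpha> s1 s2) t (Suc n) = (\<Sum>x\<in>UNIV.
      \<alpha> * (pmf (s1 []) (fst x) * pmf (t []) (snd x) * stage_payoff g (shiftS x s1) (shiftS x t) n) +
      (1-\<alpha>) * (pmf (s2 []) (fst x) * pmf (t []) (snd x) * stage_payoff g (shiftS x s2) (shiftS x t) n))"
    unfolding stage_payoff_Suc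
  proof (intro sum.cong refl)
    fix x :: "'a \<times> 'b"
    let ?w = "mixw \<alpha> (s1 []) (s2 []) (fst x)"
    have r0: "0 \<le> ?w \<and> ?w \<le> 1" by (rule mixw_range[OF Suc.prems])
    have r: "0 \<le> ?w" "?w \<le> 1" using r0 by auto
    have e1: "(\<alpha> * pmf (s1 []) (fst x) + (1-\<alpha>) * pmf (s2 []) (fst x)) * ?w = \<alpha> * pmf (s1 []) (fst x)"
     and e2: "(\<alpha> * pmf (s1 []) (fst x) + (1-\<alpha>) * pmf (s2 []) (fst x)) * (1 - ?w) = (1-\<alpha>) * pmf (s2 []) (fst x)"
      by (rule mixw_eq(1)[OF Suc.prems], rule mixw_eq(2)[OF Suc.prems])
    have "pmf (mixS \<alpha> s1 s2 []) (fst x) * pmf (t []) (snd x) * stage_payoff g (shiftS x (mixS \<alpha> s1 s2)) (shiftS x t) n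
       = (\<alpha> * pmf (s1 []) (fst x) + (1-\<alpha>) * pmf (s2 []) (fst x)) * pmf (t []) (snd x) *
         (?w * stage_payoff g (shiftS x s1) (shiftS x t) n + (1 - ?w) * stage_payoff g (shiftS x s2) (shiftS x t) n)"
      unfolding shift_mixS Suc.IH[OF r] using Suc.prems by (simp add: pmf_mixP)
    also have "\<dots> = ((\<alpha> * pmf (s1 []) (fst x) + (1-\<alpha>) * pmf (s2 []) (fst x)) * ?w) * pmf (t []) (snd x) * stage_payoff g (shiftS x s1) (shiftS x t) n
       + ((\<alpha> * pmf (s1 []) (fst x) + (1-\<alpha>) * pmf (s2 []) (fst x)) * (1 - ?w)) * pmf (t []) (snd x) * stage_payoff g (shiftS x s2) (shiftS x t) n"
      by (simp add: algebra_simps)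
    finally show "pmf (mixS \<alpha> s1 s2 []) (fst x) * pmf (t []) (snd x) * stage_payoff g (shiftS x (mixS \<alpha> s1 s2)) (shiftS x t) n =
      \<alpha> * (pmf (s1 []) (fst x) * pmf (t []) (snd x) * stage_payoff g (shiftS x s1) (shiftS x t) n) +
      (1-\<alpha>) * (pmf (s2 []) (fst x) * pmf (t []) (snd x) * stage_payoff g (shiftS x s2) (shiftS x t) n)"
      unfolding e1 e2 by (simp add: algebra_simps)
  qed
  also have "\<dots> = \<alpha> * stage_payoff g s1 t (Suc n) + (1-\<alpha>) * stage_payoff g s2 t (Suc n)"
    unfolding stage_payoff_Suc by (simp add: sum.distrib sum_distrib_left)
  finally show ?case .
qed

definition bnd :: "(nat \<Rightarrow> real) \<Rightarrow> bool" where
  "bnd f \<longleftrightarrow> (\<exists>C. \<forall>n. \<bar>f n\<bar> \<le> C)"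

definition Wgood :: "((nat \<Rightarrow> real) \<Rightarrow> real) \<Rightarrow> bool" where
  "Wgood W \<longleftrightarrow> (\<forall>f g. bnd f \<longrightarrow> bnd g \<longrightarrow> W (\<lambda>n. f n + g n) = W f + W g)
     \<and> (\<forall>f c. bnd f \<longrightarrow> W (\<lambda>n. c * f n) = c * W f)
     \<and> (\<forall>f C. (\<forall>n. \<bar>f n\<bar> \<le> C) \<longrightarrow> \<bar>W f\<bar> \<le> C)"

definition Wdec :: "real \<Rightarrow> ((nat \<Rightarrow> real) \<Rightarrow> real) \<Rightarrow> ((nat \<Rightarrow> real) \<Rightarrow> real) \<Rightarrow> bool" where
  "Wdec lam W U \<longleftrightarrow> (\<forall>f. bnd f \<longrightarrow> W f = lam * f 0 + (1-lam) * U (\<lambda>n. f (Suc n)))"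

lemma bnd_add: "bnd f \<Longrightarrow> bnd g \<Longrightarrow> bnd (\<lambda>n. f n + g n)"
  unfolding bnd_def by (metis abs_triangle_ineq add_mono order_trans)

lemma bnd_mult: "bnd f \<Longrightarrow> bnd (\<lambda>n. c * f n)"
  unfolding bnd_def by (metis abs_ge_zero abs_mult mult_left_mono)

lemma bnd_sum: "finite I \<Longrightarrow> (\<forall>i\<in>I. bnd (f i)) \<Longrightarrow> bnd (\<lambda>n. \<Sum>i\<in>I. c i * f i n)"
proof (induction I rule: finite_induct)
  case empty then show ?case by (auto simp: bnd_def intro: exI[of _ 0])
next
  case (insert x F) then show ?case by (simp add: bnd_add bnd_mult)
qed

lemma Wgood_add: "Wgood W \<Longrightarrow> bnd f \<Longrightarrow> bnd g \<Longrightarrow> W (\<lambda>n. f n + g n) = W f + W g"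
  unfolding Wgood_def by blast
lemma Wgood_smult: "Wgood W \<Longrightarrow> bnd f \<Longrightarrow> W (\<lambda>n. c * f n) = c * W f"
  unfolding Wgood_def by blast
lemma Wgood_bound: "Wgood W \<Longrightarrow> (\<And>n. \<bar>f n\<bar> \<le> C) \<Longrightarrow> \<bar>W f\<bar> \<le> C"
  unfolding Wgood_def by blast

lemma Wgood_sum:
  assumes W: "Wgood W" and "finite I" and "\<forall>i\<in>I. bnd (f i)"
  shows "W (\<lambda>n. \<Sum>i\<in>I. c i * f i n) = (\<Sum>i\<in>I. c i * W (f i))"
  using assms(2,3)
proof (induction I rule: finite_induct)
  case empty
  have b0: "bnd (\<lambda>n. 0)" by (auto simp: bnd_def intro: exI[of _ 0])
  have "W (\<lambda>n. 0 * (\<lambda>n. 0) n) = 0 * W (\<lambda>n. 0)" by (rule Wgood_smult[OF W b0])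
  then show ?case by simp
next
  case (insert x F)
  have bx: "bnd (f x)" and bF: "\<forall>i\<in>F. bnd (f i)" using insert by auto
  have "W (\<lambda>n. \<Sum>i\<in>insert x F. c i * f i n) = W (\<lambda>n. c x * f x n + (\<Sum>i\<in>F. c i * f i n))"
    using insert by simp
  also have "\<dots> = W (\<lambda>n. c x * f x n) + W (\<lambda>n. \<Sum>i\<in>F. c i * f i n)"
    by (rule Wgood_add[OF W bnd_mult[OF bx] bnd_sum[OF insert(1) bF]])
  also have "\<dots> = c x * W (f x) + (\<Sum>i\<in>F. c i * W (f i))"
    using Wgood_smult[OF W bx] insert(3)[OF bF] by simp
  finally show ?case using insert by simp
qed

lemma disc_summable:
  assumes "0 < lam" "lam < 1" "bnd f"
  shows "summable (\<lambda>n. lam * (1 - lam) ^ n * f n)"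
proof -
  obtain C where C: "\<forall>n. \<bar>f n\<bar> \<le> C" using assms(3) unfolding bnd_def by auto
  have g: "summable (\<lambda>n. C * (lam * (1 - lam) ^ n))"
    using assms by (intro summable_mult summable_mult summable_geometric) auto
  show ?thesis
  proof (rule summable_comparison_test[OF _ g])
    show "\<exists>N. \<forall>n\<ge>N. norm (lam * (1 - lam) ^ n * f n) \<le> C * (lam * (1 - lam) ^ n)"
      using assms C by (auto simp: abs_mult intro!: mult_right_mono)
  qed
qed

lemma geo_sum1:
  fixes lam :: real
  assumes "0 < lam" "lam < 1"
  shows "(\<Sum>n. lam * (1 - lam) ^ n) = 1"
proof -
  have "(\<Sum>n. lam * (1 - lam) ^ n) = lam * (\<Sum>n. (1 - lam) ^ n)"
    using suminf_mult[OF summable_geometric[of "1-lam"], of lam] assms by auto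
  also have "\<dots> = 1" using assms by (subst suminf_geometric) auto
  finally show ?thesis .
qed

lemma Wgood_disc:
  assumes "0 < lam" "lam < 1"
  shows "Wgood (disc_total lam)"
  unfolding Wgood_def
proof (intro conjI allI impI)
  fix f g assume "bnd f" "bnd g"
  then show "disc_total lam (\<lambda>n. f n + g n) = disc_total lam f + disc_total lam g"
    unfolding disc_total_def using disc_summable[OF assms]
    by (simp add: distrib_left suminf_add)
next
  fix f c assume "bnd f"
  then show "disc_total lam (\<lambda>n. c * f n) = c * disc_total lam f"
    unfolding disc_total_def using disc_summable[OF assms]
    by (subst suminf_mult[symmetric]) (auto simp: algebra_simps)
next
  fix f :: "nat \<Rightarrow> real" and C assume C: "\<forall>n. \<bar>f n\<bar> \<le> C"
  then have b: "bnd f" unfolding bnd_def by auto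
  have sg: "summable (\<lambda>n. C * (lam * (1 - lam) ^ n))"
    using assms by (intro summable_mult summable_geometric) auto
  have sf: "summable (\<lambda>n. lam * (1 - lam) ^ n * f n)" by (rule disc_summable[OF assms b])
  have sC: "(\<Sum>n. C * (lam * (1 - lam) ^ n)) = C"
    using geo_sum1[OF assms] assms by (subst suminf_mult) (auto intro: summable_geometric)
  have p: "\<bar>lam * (1 - lam) ^ n * f n\<bar> \<le> C * (lam * (1 - lam) ^ n)" for n
    using assms C by (auto simp: abs_mult intro!: mult_right_mono)
  have "(\<Sum>n. lam * (1 - lam) ^ n * f n) \<le> (\<Sum>n. C * (lam * (1 - lam) ^ n))"
    by (rule suminf_le[OF _ sf sg]) (rule abs_le_D1[OF p])
  moreover have "(\<Sum>n. - (C * (lam * (1 - lam) ^ n))) \<le> (\<Sum>n. lam * (1 - lam) ^ n * f n)"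
    by (rule suminf_le[OF _ summable_minus[OF sg] sf]) (use abs_le_D2[OF p] in \<open>simp add: minus_le_iff\<close>)
  moreover have "(\<Sum>n. - (C * (lam * (1 - lam) ^ n))) = - C"
    using suminf_minus[OF sg] sC by simp
  ultimately show "\<bar>disc_total lam f\<bar> \<le> C" unfolding disc_total_def using sC by auto
qed

lemma geo_fin:
  fixes lam :: real
  shows "(\<Sum>n<T. lam * (1 - lam) ^ n) = 1 - (1 - lam) ^ T"
  by (induction T) (auto simp: algebra_simps)

lemma Wgood_trunc:
  assumes "0 < lam" "lam < 1"
  shows "Wgood (trunc_total lam T)"
  unfolding Wgood_def
proof (intro conjI allI impI)
  fix f g :: "nat \<Rightarrow> real"
  show "trunc_total lam T (\<lambda>n. f n + g n) = trunc_total lam T f + trunc_total lam T g"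
    unfolding trunc_total_def by (simp add: distrib_left sum.distrib)
next
  fix f :: "nat \<Rightarrow> real" and c
  show "trunc_total lam T (\<lambda>n. c * f n) = c * trunc_total lam T f"
    unfolding trunc_total_def by (simp add: sum_distrib_left algebra_simps)
next
  fix f :: "nat \<Rightarrow> real" and C assume C: "\<forall>n. \<bar>f n\<bar> \<le> C"
  then have C0: "0 \<le> C" by (meson abs_ge_zero order_trans)
  have "\<bar>trunc_total lam T f\<bar> \<le> (\<Sum>n<T. \<bar>lam * (1 - lam) ^ n * f n\<bar>)"
    unfolding trunc_total_def by (rule sum_abs)
  also have "\<dots> \<le> (\<Sum>n<T. C * (lam * (1 - lam) ^ n))"
    using assms C by (intro sum_mono) (auto simp: abs_mult intro!: mult_right_mono)
  also have "\<dots> = C * (\<Sum>n<T. lam * (1 - lam) ^ n)" by (simp add: sum_distrib_left)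
  also have "\<dots> = C * (1 - (1 - lam) ^ T)" by (simp add: geo_fin)
  also have "\<dots> \<le> C" using assms C0 by (simp add: mult_left_le)
  finally show "\<bar>trunc_total lam T f\<bar> \<le> C" .
qed

lemma Wdec_disc:
  assumes "0 < lam" "lam < 1"
  shows "Wdec lam (disc_total lam) (disc_total lam)"
  unfolding Wdec_def
proof (intro allI impI)
  fix f assume b: "bnd f"
  have bs: "bnd (\<lambda>n. f (Suc n))" using b unfolding bnd_def by auto
  have s: "summable (\<lambda>n. lam * (1 - lam) ^ n * f n)" by (rule disc_summable[OF assms b])
  have s2: "summable (\<lambda>n. lam * (1 - lam) ^ n * f (Suc n))" by (rule disc_summable[OF assms bs])
  have "(\<Sum>n. lam * (1 - lam) ^ Suc n * f (Suc n)) = (\<Sum>n. lam * (1 - lam) ^ n * f n) - lam * f 0"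
    using suminf_split_head[OF s] by simp
  moreover have "(\<Sum>n. lam * (1 - lam) ^ Suc n * f (Suc n)) = (1 - lam) * (\<Sum>n. lam * (1 - lam) ^ n * f (Suc n))"
    using suminf_mult[OF s2, of "1 - lam"] by (simp add: algebra_simps)
  ultimately show "disc_total lam f = lam * f 0 + (1 - lam) * disc_total lam (\<lambda>n. f (Suc n))"
    unfolding disc_total_def by simp
qed

lemma Wdec_trunc:
  "Wdec lam (trunc_total lam (Suc T)) (trunc_total lam T)"
  unfolding Wdec_def trunc_total_def
  by (simp only: sum.lessThan_Suc_shift) (simp add: sum_distrib_left ac_simps)


definition Cm :: "('k::finite \<Rightarrow> 'l::finite \<Rightarrow> 'a::finite \<Rightarrow> 'b::finite \<Rightarrow> real) \<Rightarrow> real" where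
  "Cm M = (\<Sum>k\<in>UNIV. \<Sum>l\<in>UNIV. gb (M k l))"

definition P :: "((nat \<Rightarrow> real) \<Rightarrow> real) \<Rightarrow> ('k::finite \<Rightarrow> 'l::finite \<Rightarrow> 'a::finite \<Rightarrow> 'b::finite \<Rightarrow> real)
   \<Rightarrow> ('k \<Rightarrow> real) \<Rightarrow> ('k \<Rightarrow> ('a \<times> 'b) list \<Rightarrow> 'a pmf) \<Rightarrow> 'l \<Rightarrow> (('a \<times> 'b) list \<Rightarrow> 'b pmf) \<Rightarrow> real" where
  "P W M w \<sigma> l t = (\<Sum>k\<in>UNIV. w k * W (stage_payoff (M k l) (\<sigma> k) t))"

definition H where "H W M w \<sigma> l = (INF t. P W M w \<sigma> l t)"

lemma gb_nonneg: "0 \<le> gb g" unfolding gb_def by (intro sum_nonneg) auto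

lemma gb_le_Cm: "gb (M k l) \<le> Cm M"
proof -
  have "gb (M k l) \<le> (\<Sum>l\<in>UNIV. gb (M k l))"
    by (rule member_le_sum) (auto simp: gb_nonneg)
  also have "\<dots> \<le> Cm M" unfolding Cm_def
    by (rule member_le_sum[where f="\<lambda>k. \<Sum>l\<in>UNIV. gb (M k l)"]) (auto intro: sum_nonneg gb_nonneg)
  finally show ?thesis .
qed

lemma Cm_nonneg: "0 \<le> Cm M" by (rule order_trans[OF gb_nonneg gb_le_Cm])

lemma stage_bnd: "bnd (stage_payoff g s t)"
  unfolding bnd_def using stage_bound by blast

lemma W_stage_bound: assumes "Wgood W" shows "\<bar>W (stage_payoff (M k l) s t)\<bar> \<le> Cm M"
proof -
  have "\<And>n. \<bar>stage_payoff (M k l) s t n\<bar> \<le> Cm M" by (rule order_trans[OF stage_bound gb_le_Cm])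
  then show ?thesis by (rule Wgood_bound[OF assms])
qed

lemma P_bound:
  assumes "Wgood W"
  shows "\<bar>P W M w \<sigma> l t\<bar> \<le> (\<Sum>k\<in>UNIV. \<bar>w k\<bar>) * Cm M"
proof -
  have "\<bar>P W M w \<sigma> l t\<bar> \<le> (\<Sum>k\<in>UNIV. \<bar>w k * W (stage_payoff (M k l) (\<sigma> k) t)\<bar>)"
    unfolding P_def by (rule sum_abs)
  also have "\<dots> \<le> (\<Sum>k\<in>UNIV. \<bar>w k\<bar> * Cm M)"
    by (intro sum_mono) (simp add: abs_mult mult_left_mono W_stage_bound[OF assms])
  finally show ?thesis by (simp add: sum_distrib_right)
qed

lemma P_lower: "Wgood W \<Longrightarrow> - ((\<Sum>k\<in>UNIV. \<bar>w k\<bar>) * Cm M) \<le> P W M w \<sigma> l t"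
  using P_bound[of W M w \<sigma> l t] by (simp add: abs_le_iff)

lemma P_bdd: "Wgood W \<Longrightarrow> bdd_below (range (P W M w \<sigma> l))"
  by (rule bdd_belowI2, erule P_lower)

lemma H_le: "Wgood W \<Longrightarrow> H W M w \<sigma> l \<le> P W M w \<sigma> l t"
  unfolding H_def by (rule cINF_lower[OF P_bdd]) auto

lemma H_ge: "(\<And>t. c \<le> P W M w \<sigma> l t) \<Longrightarrow> c \<le> H W M w \<sigma> l"
  unfolding H_def by (rule cINF_greatest) auto

lemma H_approx:
  assumes "Wgood W" "0 < e"
  shows "\<exists>t. P W M w \<sigma> l t < H W M w \<sigma> l + e"
  using cINF_less_iff[of UNIV "P W M w \<sigma> l" "H W M w \<sigma> l + e"] P_bdd[OF assms(1), of M w \<sigma> l] assms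
  unfolding H_def by auto

lemma H_bound:
  assumes "Wgood W"
  shows "\<bar>H W M w \<sigma> l\<bar> \<le> (\<Sum>k\<in>UNIV. \<bar>w k\<bar>) * Cm M"
proof -
  have "H W M w \<sigma> l \<le> P W M w \<sigma> l undefined" by (rule H_le[OF assms])
  also have "\<dots> \<le> (\<Sum>k\<in>UNIV. \<bar>w k\<bar>) * Cm M" using P_bound[OF assms] abs_le_D1 by blast
  finally have 1: "H W M w \<sigma> l \<le> (\<Sum>k\<in>UNIV. \<bar>w k\<bar>) * Cm M" .
  have "- ((\<Sum>k\<in>UNIV. \<bar>w k\<bar>) * Cm M) \<le> H W M w \<sigma> l"
    by (rule H_ge) (rule P_lower[OF assms])
  with 1 show ?thesis by auto
qed

lemma H_zero: "H W M (\<lambda>k. 0) \<sigma> l = 0"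
  unfolding H_def P_def by simp

lemma H_scale:
  assumes "Wgood W" "0 < c"
  shows "H W M (\<lambda>k. c * w k) \<sigma> l = c * H W M w \<sigma> l"
proof -
  have Pe: "P W M (\<lambda>k. c * w k) \<sigma> l t = c * P W M w \<sigma> l t" for t
    unfolding P_def by (simp add: sum_distrib_left mult.assoc)
  have 1: "c * H W M w \<sigma> l \<le> H W M (\<lambda>k. c * w k) \<sigma> l"
  proof (rule H_ge)
    fix t show "c * H W M w \<sigma> l \<le> P W M (\<lambda>k. c * w k) \<sigma> l t"
      unfolding Pe using H_le[OF assms(1), of M w \<sigma> l t] assms(2) by (simp add: mult_left_mono)
  qed
  have "H W M (\<lambda>k. c * w k) \<sigma> l / c \<le> H W M w \<sigma> l"
  proof (rule H_ge)
    fix t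
    have "H W M (\<lambda>k. c * w k) \<sigma> l \<le> c * P W M w \<sigma> l t"
      using H_le[OF assms(1), of M "\<lambda>k. c * w k" \<sigma> l t] Pe by simp
    then show "H W M (\<lambda>k. c * w k) \<sigma> l / c \<le> P W M w \<sigma> l t"
      using assms(2) by (simp add: divide_simps mult.commute)
  qed
  then have 2: "H W M (\<lambda>k. c * w k) \<sigma> l \<le> c * H W M w \<sigma> l" using assms(2) by (simp add: divide_simps mult.commute)
  from 1 2 show ?thesis by simp
qed

lemma H_lip:
  assumes "Wgood W"
  shows "H W M w' \<sigma> l - (\<Sum>k\<in>UNIV. \<bar>w k - w' k\<bar>) * Cm M \<le> H W M w \<sigma> l"
proof (rule H_ge)
  fix t
  have "P W M w \<sigma> l t = P W M w' \<sigma> l t + P W M (\<lambda>k. w k - w' k) \<sigma> l t"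
    unfolding P_def sum.distrib[symmetric] by (rule sum.cong) (auto simp: algebra_simps)
  moreover have "- ((\<Sum>k\<in>UNIV. \<bar>w k - w' k\<bar>) * Cm M) \<le> P W M (\<lambda>k. w k - w' k) \<sigma> l t"
    by (rule P_lower[OF assms])
  moreover have "H W M w' \<sigma> l \<le> P W M w' \<sigma> l t" by (rule H_le[OF assms])
  ultimately show "H W M w' \<sigma> l - (\<Sum>k\<in>UNIV. \<bar>w k - w' k\<bar>) * Cm M \<le> P W M w \<sigma> l t" by linarith
qed

lemma eps_lemma:
  fixes a b K :: real
  assumes "\<And>e. 0 < e \<Longrightarrow> a \<le> b + K * e" "0 \<le> K"
  shows "a \<le> b"
proof (rule ccontr)
  assume "\<not> a \<le> b"
  then have g: "0 < (a - b) / (K + 1)" using assms(2) by simp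
  have "a \<le> b + K * ((a - b) / (K + 1))" by (rule assms(1)[OF g])
  moreover have "K * ((a - b) / (K + 1)) < a - b"
    using \<open>\<not> a \<le> b\<close> assms(2) by (simp add: divide_simps)
  ultimately show False by simp
qed

lemma P_dec:
  assumes U: "Wgood U" and D: "Wdec lam W U"
  shows "P W M w \<sigma> l t = lam * (\<Sum>k\<in>UNIV. w k * stage_payoff (M k l) (\<sigma> k) t 0)
     + (1-lam) * (\<Sum>x\<in>UNIV. pmf (t []) (snd x) *
          P U M (\<lambda>k. w k * pmf (\<sigma> k []) (fst x)) (\<lambda>k. shiftS x (\<sigma> k)) l (shiftS x t))"
proof -
  have e1: "W (stage_payoff (M k l) (\<sigma> k) t) = lam * stage_payoff (M k l) (\<sigma> k) t 0 +
     (1-lam) * (\<Sum>x\<in>UNIV. (pmf (\<sigma> k []) (fst x) * pmf (t []) (snd x)) *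
        U (stage_payoff (M k l) (shiftS x (\<sigma> k)) (shiftS x t)))" for k
  proof -
    have "W (stage_payoff (M k l) (\<sigma> k) t) = lam * stage_payoff (M k l) (\<sigma> k) t 0 +
       (1-lam) * U (\<lambda>n. stage_payoff (M k l) (\<sigma> k) t (Suc n))"
      using D stage_bnd unfolding Wdec_def by blast
    also have "U (\<lambda>n. stage_payoff (M k l) (\<sigma> k) t (Suc n)) = U (\<lambda>n. \<Sum>x\<in>UNIV.
        (pmf (\<sigma> k []) (fst x) * pmf (t []) (snd x)) * stage_payoff (M k l) (shiftS x (\<sigma> k)) (shiftS x t) n)"
      unfolding stage_payoff_Suc by simp
    also have "\<dots> = (\<Sum>x\<in>UNIV. (pmf (\<sigma> k []) (fst x) * pmf (t []) (snd x)) *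
        U (stage_payoff (M k l) (shiftS x (\<sigma> k)) (shiftS x t)))"
      by (rule Wgood_sum[OF U]) (auto simp: stage_bnd)
    finally show ?thesis .
  qed
  have a: "(\<Sum>k\<in>UNIV. w k * ((1-lam) * (\<Sum>x\<in>UNIV. (pmf (\<sigma> k []) (fst x) * pmf (t []) (snd x)) *
        U (stage_payoff (M k l) (shiftS x (\<sigma> k)) (shiftS x t)))))
     = (1-lam) * (\<Sum>k\<in>UNIV. \<Sum>x\<in>UNIV. w k * pmf (\<sigma> k []) (fst x) * pmf (t []) (snd x) *
        U (stage_payoff (M k l) (shiftS x (\<sigma> k)) (shiftS x t)))"
    by (simp add: sum_distrib_left mult_ac)
  have b: "(1-lam) * (\<Sum>x\<in>UNIV. pmf (t []) (snd x) *
          P U M (\<lambda>k. w k * pmf (\<sigma> k []) (fst x)) (\<lambda>k. shiftS x (\<sigma> k)) l (shiftS x t))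
     = (1-lam) * (\<Sum>x\<in>UNIV. \<Sum>k\<in>UNIV. w k * pmf (\<sigma> k []) (fst x) * pmf (t []) (snd x) *
        U (stage_payoff (M k l) (shiftS x (\<sigma> k)) (shiftS x t)))"
    unfolding P_def by (simp add: sum_distrib_left mult_ac)
  have c: "(\<Sum>k\<in>UNIV. \<Sum>x\<in>UNIV. w k * pmf (\<sigma> k []) (fst x) * pmf (t []) (snd x) *
        U (stage_payoff (M k l) (shiftS x (\<sigma> k)) (shiftS x t)))
     = (\<Sum>x\<in>UNIV. \<Sum>k\<in>UNIV. w k * pmf (\<sigma> k []) (fst x) * pmf (t []) (snd x) *
        U (stage_payoff (M k l) (shiftS x (\<sigma> k)) (shiftS x t)))"
    by (rule sum.swap)
  have "P W M w \<sigma> l t = (\<Sum>k\<in>UNIV. w k * (lam * stage_payoff (M k l) (\<sigma> k) t 0)) +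
     (\<Sum>k\<in>UNIV. w k * ((1-lam) * (\<Sum>x\<in>UNIV. (pmf (\<sigma> k []) (fst x) * pmf (t []) (snd x)) *
        U (stage_payoff (M k l) (shiftS x (\<sigma> k)) (shiftS x t)))))"
    unfolding P_def e1 by (simp add: distrib_left sum.distrib)
  then show ?thesis unfolding a b c by (simp add: sum_distrib_left mult_ac)
qed

definition Dom where
  "Dom W W' M e \<longleftrightarrow> (\<forall>w \<sigma> \<delta>. (\<forall>k. 0 \<le> w k) \<longrightarrow> 0 < \<delta> \<longrightarrow>
     (\<exists>\<sigma>'. \<forall>l. H W M w \<sigma> l - (e + \<delta>) * sum w UNIV \<le> H W' M w \<sigma>' l))"

lemma stage0_dep: "stage_payoff g s t 0 = stage_payoff g s' t' 0"
  if "s [] = s' []" "t [] = t' []"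
  using that by (simp add: stage_payoff_0)

lemma sum_snd_card: "(\<Sum>x\<in>(UNIV::('a::finite \<times> 'b::finite) set). pmf p (snd x)) = real CARD('a)"
  by (simp add: sum_pair sum_pmf_UNIV)

lemma sum_wa:
  fixes w :: "'k::finite \<Rightarrow> real"
  shows "(\<Sum>x\<in>(UNIV::('a::finite \<times> 'b::finite) set). pmf p (snd x) * (\<Sum>k\<in>UNIV. w k * pmf (s k) (fst x)))
     = sum w UNIV"
proof -
  have "(\<Sum>x\<in>(UNIV::('a \<times> 'b) set). pmf p (snd x) * (\<Sum>k\<in>UNIV. w k * pmf (s k) (fst x)))
     = (\<Sum>k\<in>UNIV. w k * (\<Sum>x\<in>(UNIV::('a \<times> 'b) set). pmf (s k) (fst x) * pmf p (snd x)))"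
  proof -
    have "(\<Sum>x\<in>(UNIV::('a \<times> 'b) set). pmf p (snd x) * (\<Sum>k\<in>UNIV. w k * pmf (s k) (fst x)))
       = (\<Sum>x\<in>(UNIV::('a \<times> 'b) set). \<Sum>k\<in>UNIV. w k * (pmf (s k) (fst x) * pmf p (snd x)))"
      by (simp add: sum_distrib_left mult_ac)
    also have "\<dots> = (\<Sum>k\<in>UNIV. \<Sum>x\<in>(UNIV::('a \<times> 'b) set). w k * (pmf (s k) (fst x) * pmf p (snd x)))"
      by (rule sum.swap)
    finally show ?thesis by (simp add: sum_distrib_left)
  qed
  also have "\<dots> = sum w UNIV" by (simp add: sum_pair_prod sum_pmf_UNIV)
  finally show ?thesis .
qed

lemma CL:
  fixes M :: "'k::finite \<Rightarrow> 'l::finite \<Rightarrow> 'a::finite \<Rightarrow> 'b::finite \<Rightarrow> real"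
  assumes U: "Wgood U" and U': "Wgood U'" and W: "Wgood W" and W': "Wgood W'"
    and DW: "Wdec lam W U" and DW': "Wdec lam W' U'"
    and lam: "0 < lam" "lam < 1" and D: "Dom U U' M e"
  shows "Dom W W' M ((1-lam) * e)"
  unfolding Dom_def
proof (intro allI impI)
  fix w :: "'k \<Rightarrow> real" and \<sigma> :: "'k \<Rightarrow> ('a \<times> 'b) list \<Rightarrow> 'a pmf" and \<delta> :: real
  assume w: "\<forall>k. 0 \<le> w k" and \<delta>: "0 < \<delta>"
  define wa where "wa x k = w k * pmf (\<sigma> k []) (fst x)" for x :: "'a \<times> 'b" and k
  define sa where "sa x k = shiftS x (\<sigma> k)" for x :: "'a \<times> 'b" and k
  have wa_nn: "\<forall>k. 0 \<le> wa x k" for x using w by (simp add: wa_def pmf_nonneg)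
  have "\<forall>x. \<exists>s'. \<forall>l. H U M (wa x) (sa x) l - (e+\<delta>) * sum (wa x) UNIV \<le> H U' M (wa x) s' l"
    using D \<delta> wa_nn unfolding Dom_def by blast
  then obtain S where S: "\<And>x l. H U M (wa x) (sa x) l - (e+\<delta>) * sum (wa x) UNIV \<le> H U' M (wa x) (S x) l"
    by metis
  define \<sigma>' where "\<sigma>' k h = (case h of [] \<Rightarrow> \<sigma> k [] | y # h' \<Rightarrow> S y k h')" for k h
  have \<sigma>'0: "\<sigma>' k [] = \<sigma> k []" for k by (simp add: \<sigma>'_def)
  have \<sigma>'sh: "(\<lambda>k. shiftS x (\<sigma>' k)) = S x" for x by (auto simp: \<sigma>'_def shiftS_def)
  show "\<exists>\<sigma>'. \<forall>l. H W M w \<sigma> l - ((1-lam) * e + \<delta>) * sum w UNIV \<le> H W' M w \<sigma>' l"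
  proof (intro exI allI)
    fix l
    show "H W M w \<sigma> l - ((1-lam) * e + \<delta>) * sum w UNIV \<le> H W' M w \<sigma>' l"
    proof (rule H_ge)
      fix t
      define S0 where "S0 = (\<Sum>k\<in>UNIV. w k * stage_payoff (M k l) (\<sigma> k) t 0)"
      have P'eq: "P W' M w \<sigma>' l t = lam * S0 + (1-lam) * (\<Sum>x\<in>UNIV. pmf (t []) (snd x) * P U' M (wa x) (S x) l (shiftS x t))"
        using P_dec[OF U' DW', of M w \<sigma>' l t] unfolding \<sigma>'sh \<sigma>'0 S0_def wa_def
        by (simp add: stage0_dep[of "\<sigma>' _" "\<sigma> _" t t] \<sigma>'0)
      have Q: "H U M (wa x) (sa x) l \<le> P U' M (wa x) (S x) l (shiftS x t) + (e+\<delta>) * sum (wa x) UNIV" for x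
        using H_le[OF U', of M "wa x" "S x" l "shiftS x t"] S[of x l] by linarith
      show "H W M w \<sigma> l - ((1-lam) * e + \<delta>) * sum w UNIV \<le> P W' M w \<sigma>' l t"
      proof (rule eps_lemma[where K = "(1-lam) * real CARD('a)"])
        fix \<epsilon> :: real assume \<epsilon>: "0 < \<epsilon>"
        have "\<forall>x. \<exists>r. P U M (wa x) (sa x) l r < H U M (wa x) (sa x) l + \<epsilon>"
          using H_approx[OF U \<epsilon>] by blast
        then obtain R where R: "\<And>x. P U M (wa x) (sa x) l (R x) < H U M (wa x) (sa x) l + \<epsilon>" by metis
        define t' where "t' h = (case h of [] \<Rightarrow> t [] | y # h' \<Rightarrow> R y h')" for h
        have t'0: "t' [] = t []" by (simp add: t'_def)
        have t'sh: "shiftS x t' = R x" for x by (auto simp: t'_def shiftS_def)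
        define A where "A = (\<Sum>x\<in>UNIV. pmf (t []) (snd x) * P U' M (wa x) (S x) l (shiftS x t))"
        have key: "(\<Sum>x\<in>UNIV. pmf (t []) (snd x) * P U M (wa x) (sa x) l (R x))
            \<le> A + (e+\<delta>) * sum w UNIV + real CARD('a) * \<epsilon>"
        proof -
          have "(\<Sum>x\<in>UNIV. pmf (t []) (snd x) * P U M (wa x) (sa x) l (R x))
             \<le> (\<Sum>x\<in>UNIV. pmf (t []) (snd x) * (P U' M (wa x) (S x) l (shiftS x t) + (e+\<delta>) * sum (wa x) UNIV + \<epsilon>))"
          proof (rule sum_mono, rule mult_left_mono)
            fix x show "P U M (wa x) (sa x) l (R x) \<le> P U' M (wa x) (S x) l (shiftS x t) + (e+\<delta>) * sum (wa x) UNIV + \<epsilon>"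
              using R[of x] Q[of x] by linarith
          qed (simp add: pmf_nonneg)
          also have "\<dots> = A + (e+\<delta>) * (\<Sum>x\<in>UNIV. pmf (t []) (snd x) * sum (wa x) UNIV)
              + \<epsilon> * (\<Sum>x\<in>(UNIV::('a\<times>'b) set). pmf (t []) (snd x))"
            unfolding A_def by (simp add: distrib_left sum.distrib sum_distrib_left sum_distrib_right mult_ac)
          also have "(\<Sum>x\<in>UNIV. pmf (t []) (snd x) * sum (wa x) UNIV) = sum w UNIV"
            unfolding wa_def by (rule sum_wa)
          also have "(\<Sum>x\<in>(UNIV::('a\<times>'b) set). pmf (t []) (snd x)) = real CARD('a)"
            by (rule sum_snd_card)
          finally show ?thesis by (simp add: mult_ac)
        qed
        have "H W M w \<sigma> l \<le> P W M w \<sigma> l t'" by (rule H_le[OF W])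
        also have "P W M w \<sigma> l t' = lam * S0 + (1-lam) * (\<Sum>x\<in>UNIV. pmf (t []) (snd x) * P U M (wa x) (sa x) l (R x))"
          using P_dec[OF U DW, of M w \<sigma> l t'] unfolding S0_def wa_def sa_def t'0 t'sh
          by (simp add: stage0_dep[of "\<sigma> _" "\<sigma> _" t' t] t'0)
        also have "\<dots> \<le> lam * S0 + (1-lam) * (A + (e+\<delta>) * sum w UNIV + real CARD('a) * \<epsilon>)"
          using key lam by (intro add_left_mono mult_left_mono) auto
        also have "\<dots> = P W' M w \<sigma>' l t + (1-lam) * (e+\<delta>) * sum w UNIV + (1-lam) * real CARD('a) * \<epsilon>"
          unfolding P'eq A_def by (simp add: algebra_simps)
        finally have 1: "H W M w \<sigma> l \<le> P W' M w \<sigma>' l t + (1-lam) * (e+\<delta>) * sum w UNIV + (1-lam) * real CARD('a) * \<epsilon>" .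
        have "(1-lam) * (e+\<delta>) * sum w UNIV \<le> ((1-lam) * e + \<delta>) * sum w UNIV"
          using lam \<delta> w by (intro mult_right_mono sum_nonneg) (auto simp: algebra_simps)
        with 1 show "H W M w \<sigma> l - ((1-lam) * e + \<delta>) * sum w UNIV \<le> P W' M w \<sigma>' l t + (1-lam) * real CARD('a) * \<epsilon>"
          by linarith
      qed (use lam in simp)
    qed
  qed
qed

lemma INF_sep:
  fixes F :: "'l::finite \<Rightarrow> 'x \<Rightarrow> real" and q :: "'l \<Rightarrow> real"
  assumes bdd: "\<And>l. bdd_below (range (F l))" and q: "\<And>l. 0 \<le> q l"
  shows "(INF \<tau>. c + (\<Sum>l\<in>UNIV. q l * F l (\<tau> l))) = c + (\<Sum>l\<in>UNIV. q l * (INF t. F l t))"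
proof -
  have "\<forall>l. \<exists>m. \<forall>t. m \<le> F l t" using bdd unfolding bdd_below_def by auto
  then obtain lb where lb: "\<And>l t. lb l \<le> F l t" by metis
  have bd: "bdd_below (range (\<lambda>\<tau>. c + (\<Sum>l\<in>UNIV. q l * F l (\<tau> l))))"
  proof (rule bdd_belowI2)
    fix \<tau> :: "'l \<Rightarrow> 'x"
    show "c + (\<Sum>l\<in>UNIV. q l * lb l) \<le> c + (\<Sum>l\<in>UNIV. q l * F l (\<tau> l))"
      using lb q by (intro add_left_mono sum_mono mult_left_mono) auto
  qed
  have ge: "c + (\<Sum>l\<in>UNIV. q l * (INF t. F l t)) \<le> (INF \<tau>. c + (\<Sum>l\<in>UNIV. q l * F l (\<tau> l)))"
  proof (rule cINF_greatest)
    fix \<tau> :: "'l \<Rightarrow> 'x"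
    show "c + (\<Sum>l\<in>UNIV. q l * (INF t. F l t)) \<le> c + (\<Sum>l\<in>UNIV. q l * F l (\<tau> l))"
      using q cINF_lower[OF bdd] by (intro add_left_mono sum_mono mult_left_mono) auto
  qed auto
  have le: "(INF \<tau>. c + (\<Sum>l\<in>UNIV. q l * F l (\<tau> l))) \<le> c + (\<Sum>l\<in>UNIV. q l * (INF t. F l t))"
  proof (rule eps_lemma[where K="\<Sum>l\<in>UNIV. q l"])
    fix e :: real assume e: "0 < e"
    have "\<exists>t. F l t < (INF t. F l t) + e" for l
      using cINF_less_iff[of UNIV "F l" "(INF t. F l t) + e"] bdd[of l] e by auto
    then have "\<forall>l. \<exists>t. F l t < (INF t. F l t) + e" by blast
    then obtain \<tau> where \<tau>: "\<And>l. F l (\<tau> l) < (INF t. F l t) + e" by metis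
    have "(INF \<tau>. c + (\<Sum>l\<in>UNIV. q l * F l (\<tau> l))) \<le> c + (\<Sum>l\<in>UNIV. q l * F l (\<tau> l))"
      by (rule cINF_lower[OF bd]) auto
    also have "\<dots> \<le> c + (\<Sum>l\<in>UNIV. q l * ((INF t. F l t) + e))"
      using q \<tau> by (intro add_left_mono sum_mono mult_left_mono) (auto intro: less_imp_le)
    also have "\<dots> = c + (\<Sum>l\<in>UNIV. q l * (INF t. F l t)) + (\<Sum>l\<in>UNIV. q l) * e"
      by (simp add: distrib_left sum.distrib sum_distrib_right)
    finally show "(INF \<tau>. c + (\<Sum>l\<in>UNIV. q l * F l (\<tau> l))) \<le> c + (\<Sum>l\<in>UNIV. q l * (INF t. F l t)) + (\<Sum>l\<in>UNIV. q l) * e" .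
  qed (use q in \<open>simp add: sum_nonneg\<close>)
  from ge le show ?thesis by simp
qed

definition G1 where
  "G1 W M \<mu> q \<pi> \<sigma> = (\<Sum>k\<in>UNIV. pmf \<pi> k * \<mu> k) + (\<Sum>l\<in>UNIV. pmf q l * H W M (pmf \<pi>) \<sigma> l)"

lemma payoff1_eq:
  "dual1_payoff W M \<mu> q \<pi> \<sigma> \<tau> = (\<Sum>k\<in>UNIV. pmf \<pi> k * \<mu> k) + (\<Sum>l\<in>UNIV. pmf q l * P W M (pmf \<pi>) \<sigma> l (\<tau> l))"
proof -
  have "(\<Sum>l\<in>UNIV. pmf q l * P W M (pmf \<pi>) \<sigma> l (\<tau> l)) =
      (\<Sum>l\<in>UNIV. \<Sum>k\<in>UNIV. pmf \<pi> k * (pmf q l * W (stage_payoff (M k l) (\<sigma> k) (\<tau> l))))"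
    unfolding P_def by (simp add: sum_distrib_left mult_ac)
  also have "\<dots> = (\<Sum>k\<in>UNIV. \<Sum>l\<in>UNIV. pmf \<pi> k * (pmf q l * W (stage_payoff (M k l) (\<sigma> k) (\<tau> l))))"
    by (rule sum.swap)
  finally show ?thesis unfolding dual1_payoff_def
    by (simp add: distrib_left sum.distrib sum_distrib_left)
qed

lemma V1_repr:
  assumes W: "Wgood W"
  shows "dual1_val W M \<mu> q = (SUP (\<pi>, \<sigma>)\<in>UNIV. G1 W M \<mu> q \<pi> \<sigma>)"
  unfolding dual1_val_def
proof (rule arg_cong[where f=Sup], rule image_cong[OF refl])
  fix x :: "'a pmf \<times> ('a \<Rightarrow> ('c \<times> 'd) list \<Rightarrow> 'c pmf)"
  obtain \<pi> \<sigma> where x: "x = (\<pi>, \<sigma>)" by (cases x)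
  have "(INF \<tau>. dual1_payoff W M \<mu> q \<pi> \<sigma> \<tau>) = G1 W M \<mu> q \<pi> \<sigma>"
    unfolding payoff1_eq G1_def H_def
    by (rule INF_sep[OF P_bdd[OF W]]) (simp add: pmf_nonneg)
  then show "(case x of (\<pi>, \<sigma>) \<Rightarrow> INF \<tau>. dual1_payoff W M \<mu> q \<pi> \<sigma> \<tau>) = (case x of (\<pi>, \<sigma>) \<Rightarrow> G1 W M \<mu> q \<pi> \<sigma>)"
    by (simp add: x)
qed

lemma sum_abs_pmf: "(\<Sum>k\<in>(UNIV::'k::finite set). \<bar>pmf \<pi> k\<bar>) = 1"
  by (simp add: sum_pmf_UNIV pmf_nonneg)

lemma G1_bound:
  assumes W: "Wgood W"
  shows "G1 W M \<mu> q \<pi> \<sigma> \<le> (\<Sum>k\<in>UNIV. \<bar>\<mu> k\<bar>) + Cm M"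
proof -
  have 1: "(\<Sum>k\<in>UNIV. pmf \<pi> k * \<mu> k) \<le> (\<Sum>k\<in>UNIV. \<bar>\<mu> k\<bar>)"
  proof (rule sum_mono)
    fix k
    have "pmf \<pi> k * \<mu> k \<le> pmf \<pi> k * \<bar>\<mu> k\<bar>" by (simp add: mult_left_mono pmf_nonneg)
    also have "\<dots> \<le> 1 * \<bar>\<mu> k\<bar>" by (rule mult_right_mono[OF pmf_le_1 abs_ge_zero])
    finally show "pmf \<pi> k * \<mu> k \<le> \<bar>\<mu> k\<bar>" by simp
  qed
  have 2: "(\<Sum>l\<in>UNIV. pmf q l * H W M (pmf \<pi>) \<sigma> l) \<le> (\<Sum>l\<in>UNIV. pmf q l * Cm M)"
  proof (intro sum_mono mult_left_mono)
    fix l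
    show "H W M (pmf \<pi>) \<sigma> l \<le> Cm M"
      using H_bound[OF W, of M "pmf \<pi>" \<sigma> l] unfolding sum_abs_pmf by simp
  qed (simp add: pmf_nonneg)
  show ?thesis using 1 2 unfolding G1_def by (simp add: sum_distrib_right[symmetric] sum_pmf_UNIV)
qed

lemma Dom_V1:
  assumes W: "Wgood W" and W': "Wgood W'" and D: "Dom W W' M d"
  shows "dual1_val W M \<mu> q \<le> dual1_val W' M \<mu> q + d"
  unfolding V1_repr[OF W] V1_repr[OF W']
proof (rule eps_lemma[where K=1])
  fix \<delta> :: real assume \<delta>: "0 < \<delta>"
  have bdd: "bdd_above ((\<lambda>(\<pi>, \<sigma>). G1 W' M \<mu> q \<pi> \<sigma>) ` UNIV)"
    by (rule bdd_aboveI2[where M="(\<Sum>k\<in>UNIV. \<bar>\<mu> k\<bar>) + Cm M"]) (auto simp: G1_bound[OF W'])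
  show "(SUP (\<pi>, \<sigma>)\<in>UNIV. G1 W M \<mu> q \<pi> \<sigma>) \<le> (SUP (\<pi>, \<sigma>)\<in>UNIV. G1 W' M \<mu> q \<pi> \<sigma>) + d + 1 * \<delta>"
  proof (rule cSUP_least)
    fix x :: "'a pmf \<times> ('a \<Rightarrow> ('c \<times> 'd) list \<Rightarrow> 'c pmf)"
    obtain \<pi> \<sigma> where x: "x = (\<pi>, \<sigma>)" by (cases x)
    obtain \<sigma>' where \<sigma>': "\<And>l. H W M (pmf \<pi>) \<sigma> l - (d + \<delta>) * sum (pmf \<pi>) UNIV \<le> H W' M (pmf \<pi>) \<sigma>' l"
      using D \<delta> unfolding Dom_def by (meson pmf_nonneg)
    have "G1 W M \<mu> q \<pi> \<sigma> \<le> G1 W' M \<mu> q \<pi> \<sigma>' + (d + \<delta>)"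
    proof -
      have "(\<Sum>l\<in>UNIV. pmf q l * H W M (pmf \<pi>) \<sigma> l) \<le> (\<Sum>l\<in>UNIV. pmf q l * (H W' M (pmf \<pi>) \<sigma>' l + (d + \<delta>)))"
        using \<sigma>' by (intro sum_mono mult_left_mono) (auto simp: pmf_nonneg sum_pmf_UNIV algebra_simps)
      also have "\<dots> = (\<Sum>l\<in>UNIV. pmf q l * H W' M (pmf \<pi>) \<sigma>' l) + (d + \<delta>)"
        by (simp add: distrib_left sum.distrib sum_distrib_right[symmetric] sum_pmf_UNIV)
      finally show ?thesis unfolding G1_def by simp
    qed
    also have "G1 W' M \<mu> q \<pi> \<sigma>' \<le> (SUP (\<pi>, \<sigma>)\<in>UNIV. G1 W' M \<mu> q \<pi> \<sigma>)"
      using cSUP_upper[OF _ bdd, of "(\<pi>, \<sigma>')"] by simp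
    finally show "(case x of (\<pi>, \<sigma>) \<Rightarrow> G1 W M \<mu> q \<pi> \<sigma>) \<le> (SUP (\<pi>, \<sigma>)\<in>UNIV. G1 W' M \<mu> q \<pi> \<sigma>) + d + 1 * \<delta>"
      by (simp add: x)
  qed auto
qed simp

definition G2 where "G2 W M p \<nu> \<sigma> = (INF (\<rho>, \<tau>)\<in>UNIV. dual2_payoff W M p \<nu> \<sigma> \<rho> \<tau>)"

lemma payoff2_eq:
  "dual2_payoff W M p \<nu> \<sigma> \<rho> \<tau> = (\<Sum>l\<in>UNIV. pmf \<rho> l * (\<nu> l + P W M (pmf p) \<sigma> l (\<tau> l)))"
  unfolding dual2_payoff_def P_def by simp

lemma pay2_lower:
  assumes W: "Wgood W" and c: "\<And>l. c \<le> \<nu> l + H W M (pmf p) \<sigma> l"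
  shows "c \<le> dual2_payoff W M p \<nu> \<sigma> \<rho> \<tau>"
proof -
  have "c = (\<Sum>l\<in>UNIV. pmf \<rho> l * c)" by (simp add: sum_distrib_right[symmetric] sum_pmf_UNIV)
  also have "\<dots> \<le> (\<Sum>l\<in>UNIV. pmf \<rho> l * (\<nu> l + P W M (pmf p) \<sigma> l (\<tau> l)))"
  proof (intro sum_mono mult_left_mono)
    fix l show "c \<le> \<nu> l + P W M (pmf p) \<sigma> l (\<tau> l)" using c[of l] H_le[OF W, of M "pmf p" \<sigma> l "\<tau> l"] by linarith
  qed (simp add: pmf_nonneg)
  finally show ?thesis unfolding payoff2_eq .
qed

lemma nu_H_lower:
  assumes W: "Wgood W"
  shows "- (\<Sum>l\<in>UNIV. \<bar>\<nu> l\<bar>) - Cm M \<le> \<nu> l + H W M (pmf p) \<sigma> l"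
proof -
  have "\<bar>\<nu> l\<bar> \<le> (\<Sum>l\<in>UNIV. \<bar>\<nu> l\<bar>)" by (rule member_le_sum) auto
  moreover have "\<bar>H W M (pmf p) \<sigma> l\<bar> \<le> Cm M" using H_bound[OF W, of M "pmf p" \<sigma> l] by (simp add: sum_abs_pmf sum_pmf_UNIV)
  ultimately show ?thesis by (simp add: abs_le_iff)
qed

lemma pay2_bdd: "Wgood W \<Longrightarrow> bdd_below ((\<lambda>(\<rho>, \<tau>). dual2_payoff W M p \<nu> \<sigma> \<rho> \<tau>) ` UNIV)"
  by (rule bdd_belowI2[where m="- (\<Sum>l\<in>UNIV. \<bar>\<nu> l\<bar>) - Cm M"]) (auto intro!: pay2_lower nu_H_lower)

lemma G2_lower:
  assumes W: "Wgood W" and c: "\<And>l. c \<le> \<nu> l + H W M (pmf p) \<sigma> l"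
  shows "c \<le> G2 W M p \<nu> \<sigma>"
  unfolding G2_def by (rule cINF_greatest) (auto intro!: pay2_lower[OF W c])

lemma G2_upper:
  assumes W: "Wgood W"
  shows "G2 W M p \<nu> \<sigma> \<le> \<nu> l + H W M (pmf p) \<sigma> l"
proof -
  have "G2 W M p \<nu> \<sigma> - \<nu> l \<le> H W M (pmf p) \<sigma> l"
  proof (rule H_ge)
    fix t
    have "G2 W M p \<nu> \<sigma> \<le> dual2_payoff W M p \<nu> \<sigma> (return_pmf l) (\<lambda>_. t)"
      unfolding G2_def using cINF_lower[OF pay2_bdd[OF W], of "(return_pmf l, \<lambda>_. t)"] by simp
    also have "\<dots> = \<nu> l + P W M (pmf p) \<sigma> l t"
      unfolding payoff2_eq by (simp add: pmf_return indicator_def)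
    finally show "G2 W M p \<nu> \<sigma> - \<nu> l \<le> P W M (pmf p) \<sigma> l t" by simp
  qed
  then show ?thesis by simp
qed

lemma V2_repr: "dual2_val W M p \<nu> = (SUP \<sigma>. G2 W M p \<nu> \<sigma>)"
  unfolding dual2_val_def G2_def by simp

lemma Dom_V2:
  assumes W: "Wgood W" and W': "Wgood W'" and D: "Dom W W' M d"
  shows "dual2_val W M p \<nu> \<le> dual2_val W' M p \<nu> + d"
  unfolding V2_repr
proof (rule eps_lemma[where K=1])
  fix \<delta> :: real assume \<delta>: "0 < \<delta>"
  have bdd: "bdd_above (range (G2 W' M p \<nu>))"
  proof (rule bdd_aboveI2[where M="\<nu> undefined + Cm M"])
    fix \<sigma>
    have "G2 W' M p \<nu> \<sigma> \<le> \<nu> undefined + H W' M (pmf p) \<sigma> undefined" by (rule G2_upper[OF W'])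
    moreover have "\<bar>H W' M (pmf p) \<sigma> undefined\<bar> \<le> Cm M"
      using H_bound[OF W', of M "pmf p" \<sigma> undefined] by (simp add: sum_abs_pmf sum_pmf_UNIV)
    ultimately show "G2 W' M p \<nu> \<sigma> \<le> \<nu> undefined + Cm M" by (simp add: abs_le_iff)
  qed
  show "(SUP \<sigma>. G2 W M p \<nu> \<sigma>) \<le> (SUP \<sigma>. G2 W' M p \<nu> \<sigma>) + d + 1 * \<delta>"
  proof (rule cSUP_least)
    fix \<sigma>
    obtain \<sigma>' where \<sigma>': "\<And>l. H W M (pmf p) \<sigma> l - (d + \<delta>) * sum (pmf p) UNIV \<le> H W' M (pmf p) \<sigma>' l"
      using D \<delta> unfolding Dom_def by (meson pmf_nonneg)
    have "G2 W M p \<nu> \<sigma> - (d + \<delta>) \<le> G2 W' M p \<nu> \<sigma>'"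
    proof (rule G2_lower[OF W'])
      fix l show "G2 W M p \<nu> \<sigma> - (d + \<delta>) \<le> \<nu> l + H W' M (pmf p) \<sigma>' l"
        using G2_upper[OF W, of M p \<nu> \<sigma> l] \<sigma>'[of l] by (simp add: sum_pmf_UNIV)
    qed
    also have "\<dots> \<le> (SUP \<sigma>. G2 W' M p \<nu> \<sigma>)" by (rule cSUP_upper[OF _ bdd]) auto
    finally show "G2 W M p \<nu> \<sigma> \<le> (SUP \<sigma>. G2 W' M p \<nu> \<sigma>) + d + 1 * \<delta>" by simp
  qed auto
qed simp


lemma W_mix:
  fixes g :: "'a::finite \<Rightarrow> 'b::finite \<Rightarrow> real"
  assumes W: "Wgood W" and "0 \<le> u" "u \<le> 1"
  shows "W (stage_payoff g (mixS u s1 s2) t) = u * W (stage_payoff g s1 t) + (1-u) * W (stage_payoff g s2 t)"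
proof -
  have "W (stage_payoff g (mixS u s1 s2) t) = W (\<lambda>n. u * stage_payoff g s1 t n + (1-u) * stage_payoff g s2 t n)"
    by (rule arg_cong[where f=W], rule ext, rule stage_mix[OF assms(2,3)])
  also have "\<dots> = W (\<lambda>n. u * stage_payoff g s1 t n) + W (\<lambda>n. (1-u) * stage_payoff g s2 t n)"
    by (rule Wgood_add[OF W bnd_mult[OF stage_bnd] bnd_mult[OF stage_bnd]])
  also have "\<dots> = u * W (stage_payoff g s1 t) + (1-u) * W (stage_payoff g s2 t)"
  proof -
    have "W (\<lambda>n. u * stage_payoff g s1 t n) = u * W (stage_payoff g s1 t)" by (rule Wgood_smult[OF W stage_bnd])
    moreover have "W (\<lambda>n. (1-u) * stage_payoff g s2 t n) = (1-u) * W (stage_payoff g s2 t)" by (rule Wgood_smult[OF W stage_bnd])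
    ultimately show ?thesis by simp
  qed
  finally show ?thesis .
qed

lemma H_mix:
  assumes W: "Wgood W" and u: "0 \<le> u" "u \<le> 1"
  shows "u * H W M (pmf \<pi>1) \<sigma>1 l + (1-u) * H W M (pmf \<pi>2) \<sigma>2 l
     \<le> H W M (pmf (mixP u \<pi>1 \<pi>2)) (\<lambda>k. mixS (mixw u \<pi>1 \<pi>2 k) (\<sigma>1 k) (\<sigma>2 k)) l"
proof (rule H_ge)
  fix t
  have "P W M (pmf (mixP u \<pi>1 \<pi>2)) (\<lambda>k. mixS (mixw u \<pi>1 \<pi>2 k) (\<sigma>1 k) (\<sigma>2 k)) l t
      = (\<Sum>k\<in>UNIV. (u * pmf \<pi>1 k + (1-u) * pmf \<pi>2 k) * (mixw u \<pi>1 \<pi>2 k * W (stage_payoff (M k l) (\<sigma>1 k) t)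
          + (1 - mixw u \<pi>1 \<pi>2 k) * W (stage_payoff (M k l) (\<sigma>2 k) t)))"
  proof -
    have mw: "W (stage_payoff (M k l) (mixS (mixw u \<pi>1 \<pi>2 k) (\<sigma>1 k) (\<sigma>2 k)) t) =
      mixw u \<pi>1 \<pi>2 k * W (stage_payoff (M k l) (\<sigma>1 k) t) + (1 - mixw u \<pi>1 \<pi>2 k) * W (stage_payoff (M k l) (\<sigma>2 k) t)" for k
    proof -
      have r: "0 \<le> mixw u \<pi>1 \<pi>2 k \<and> mixw u \<pi>1 \<pi>2 k \<le> 1" by (rule mixw_range[OF u])
      show ?thesis using r by (intro W_mix[OF W]) auto
    qed
    show ?thesis unfolding P_def by (simp add: pmf_mixP[OF u] mw)
  qed
  also have "\<dots> = (\<Sum>k\<in>UNIV. ((u * pmf \<pi>1 k + (1-u) * pmf \<pi>2 k) * mixw u \<pi>1 \<pi>2 k) * W (stage_payoff (M k l) (\<sigma>1 k) t)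
          + ((u * pmf \<pi>1 k + (1-u) * pmf \<pi>2 k) * (1 - mixw u \<pi>1 \<pi>2 k)) * W (stage_payoff (M k l) (\<sigma>2 k) t))"
    by (simp add: algebra_simps)
  also have "\<dots> = u * P W M (pmf \<pi>1) \<sigma>1 l t + (1-u) * P W M (pmf \<pi>2) \<sigma>2 l t"
    unfolding mixw_eq[OF u] P_def by (simp add: sum.distrib sum_distrib_left mult_ac)
  finally have e: "P W M (pmf (mixP u \<pi>1 \<pi>2)) (\<lambda>k. mixS (mixw u \<pi>1 \<pi>2 k) (\<sigma>1 k) (\<sigma>2 k)) l t
      = u * P W M (pmf \<pi>1) \<sigma>1 l t + (1-u) * P W M (pmf \<pi>2) \<sigma>2 l t" .
  have "u * H W M (pmf \<pi>1) \<sigma>1 l \<le> u * P W M (pmf \<pi>1) \<sigma>1 l t"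
    by (rule mult_left_mono[OF H_le[OF W]]) (use u in auto)
  moreover have "(1-u) * H W M (pmf \<pi>2) \<sigma>2 l \<le> (1-u) * P W M (pmf \<pi>2) \<sigma>2 l t"
    by (rule mult_left_mono[OF H_le[OF W]]) (use u in auto)
  ultimately show "u * H W M (pmf \<pi>1) \<sigma>1 l + (1-u) * H W M (pmf \<pi>2) \<sigma>2 l
     \<le> P W M (pmf (mixP u \<pi>1 \<pi>2)) (\<lambda>k. mixS (mixw u \<pi>1 \<pi>2 k) (\<sigma>1 k) (\<sigma>2 k)) l t"
    unfolding e by linarith
qed

lemma H_mix_same:
  assumes W: "Wgood W" and u: "0 \<le> u" "u \<le> 1"
  shows "u * H W M w \<sigma>1 l + (1-u) * H W M w \<sigma>2 l \<le> H W M w (\<lambda>k. mixS u (\<sigma>1 k) (\<sigma>2 k)) l"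
proof (rule H_ge)
  fix t
  have e: "P W M w (\<lambda>k. mixS u (\<sigma>1 k) (\<sigma>2 k)) l t = u * P W M w \<sigma>1 l t + (1-u) * P W M w \<sigma>2 l t"
    unfolding P_def sum_distrib_left sum.distrib[symmetric] by (rule sum.cong) (auto simp: W_mix[OF W u] algebra_simps)
  have "u * H W M w \<sigma>1 l \<le> u * P W M w \<sigma>1 l t"
    by (rule mult_left_mono[OF H_le[OF W]]) (use u in auto)
  moreover have "(1-u) * H W M w \<sigma>2 l \<le> (1-u) * P W M w \<sigma>2 l t"
    by (rule mult_left_mono[OF H_le[OF W]]) (use u in auto)
  ultimately show "u * H W M w \<sigma>1 l + (1-u) * H W M w \<sigma>2 l \<le> P W M w (\<lambda>k. mixS u (\<sigma>1 k) (\<sigma>2 k)) l t"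
    unfolding e by linarith
qed

definition NDom where
  "NDom W W' M e \<longleftrightarrow> (\<forall>(\<pi>::'k::finite pmf) \<sigma> \<delta>. 0 < \<delta> \<longrightarrow>
     (\<exists>\<sigma>'. \<forall>l. H W M (pmf \<pi>) \<sigma> l - (e + \<delta>) \<le> H W' M (pmf \<pi>) \<sigma>' l))"

lemma NDom_Dom:
  fixes M :: "'k::finite \<Rightarrow> 'l::finite \<Rightarrow> 'a::finite \<Rightarrow> 'b::finite \<Rightarrow> real"
  assumes W: "Wgood W" and W': "Wgood W'" and N: "NDom W W' M e"
  shows "Dom W W' M e"
  unfolding Dom_def
proof (intro allI impI)
  fix w :: "'k \<Rightarrow> real" and \<sigma> and \<delta> :: real
  assume w: "\<forall>k. 0 \<le> w k" and \<delta>: "0 < \<delta>"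
  show "\<exists>\<sigma>'. \<forall>l. H W M w \<sigma> l - (e + \<delta>) * sum w UNIV \<le> H W' M w \<sigma>' l"
  proof (cases "sum w UNIV = 0")
    case True
    then have "w = (\<lambda>k. 0)" using w by (auto simp: sum_nonneg_eq_0_iff)
    then show ?thesis by (auto simp: H_zero)
  next
    case False
    define s where "s = sum w UNIV"
    have s: "0 < s" using False w unfolding s_def by (metis order_le_less sum_nonneg)
    obtain \<pi> where \<pi>: "pmf \<pi> = (\<lambda>k. w k / s)"
      using simplex_pmf[of "\<lambda>k. w k / s"] w s by (auto simp: sum_divide_distrib[symmetric] s_def)
    have ww: "w = (\<lambda>k. s * pmf \<pi> k)" using s by (auto simp: \<pi>)
    obtain \<sigma>' where \<sigma>': "\<And>l. H W M (pmf \<pi>) \<sigma> l - (e + \<delta>) \<le> H W' M (pmf \<pi>) \<sigma>' l"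
      using N \<delta> unfolding NDom_def by blast
    show ?thesis
    proof (intro exI allI)
      fix l
      have "H W M w \<sigma> l - (e + \<delta>) * sum w UNIV = s * (H W M (pmf \<pi>) \<sigma> l - (e + \<delta>))"
        unfolding s_def[symmetric] by (subst ww, subst H_scale[OF W s]) (simp add: algebra_simps)
      also have "\<dots> \<le> s * H W' M (pmf \<pi>) \<sigma>' l" using \<sigma>' s by (simp add: mult_left_mono)
      also have "\<dots> = H W' M w \<sigma>' l" by (subst ww, subst H_scale[OF W' s]) simp
      finally show "H W M w \<sigma> l - (e + \<delta>) * sum w UNIV \<le> H W' M w \<sigma>' l" .
    qed
  qed
qed

lemma inner_vec_real: "inner a x = (\<Sum>l\<in>UNIV. a$l * x$l)" for a x :: "real^'n"
  by (simp add: inner_vec_def)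

lemma inner_down:
  fixes a x :: "real^'n"
  shows "inner a (\<chi> l. if l = l0 then x$l - s else x$l) = inner a x - s * a$l0"
proof -
  have "inner a (\<chi> l. if l = l0 then x$l - s else x$l) = (\<Sum>l\<in>UNIV. a$l * x$l - (if l = l0 then a$l * s else 0))"
    unfolding inner_vec_real by (rule sum.cong) (auto simp: algebra_simps)
  also have "\<dots> = inner a x - s * a$l0"
    unfolding inner_vec_real by (simp add: sum_subtractf)
  finally show ?thesis .
qed

lemma sep_sign:
  fixes a :: "real^'n" and C :: "(real^'n) set"
  assumes x0: "x0 \<in> C" and down: "\<And>x s l0. x \<in> C \<Longrightarrow> 0 \<le> s \<Longrightarrow> (\<chi> l. if l = l0 then x$l - s else x$l) \<in> C"
    and ab: "\<And>x. x \<in> C \<Longrightarrow> b < inner a x"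
  shows "a$l0 \<le> 0"
proof (rule ccontr)
  assume "\<not> a$l0 \<le> 0"
  then have pos: "0 < a$l0" by simp
  define s where "s = (inner a x0 - b) / a$l0"
  have s0: "0 \<le> s" using ab[OF x0] pos by (simp add: s_def)
  have "b < inner a (\<chi> l. if l = l0 then x0$l - s else x0$l)" by (rule ab[OF down[OF x0 s0]])
  also have "\<dots> = b" unfolding inner_down using pos by (simp add: s_def)
  finally show False by simp
qed

lemma pos_normalize:
  fixes a :: "real^'n"
  assumes "\<And>l. a$l \<le> 0" "a \<noteq> 0"
  shows "0 < (\<Sum>l\<in>UNIV. - a$l)"
proof -
  have nn: "\<And>l. 0 \<le> - a$l" using assms(1) by simp
  have "(\<Sum>l\<in>UNIV. - a$l) \<noteq> 0"
  proof
    assume "(\<Sum>l\<in>UNIV. - a$l) = 0"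
    then have "\<forall>l. - a$l = 0" using nn by (simp add: sum_nonneg_eq_0_iff)
    then have "a = 0" by (simp add: vec_eq_iff)
    with assms(2) show False by simp
  qed
  moreover have "0 \<le> (\<Sum>l\<in>UNIV. - a$l)" using nn by (rule sum_nonneg)
  ultimately show ?thesis by linarith
qed

lemma G2_bdd: assumes W: "Wgood W" shows "bdd_above (range (G2 W M p \<nu>))"
proof (rule bdd_aboveI2[where M="\<nu> undefined + Cm M"])
  fix \<sigma>
  have "G2 W M p \<nu> \<sigma> \<le> \<nu> undefined + H W M (pmf p) \<sigma> undefined" by (rule G2_upper[OF W])
  moreover have "\<bar>H W M (pmf p) \<sigma> undefined\<bar> \<le> Cm M"
    using H_bound[OF W, of M "pmf p" \<sigma> undefined] by (simp add: sum_abs_pmf sum_pmf_UNIV)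
  ultimately show "G2 W M p \<nu> \<sigma> \<le> \<nu> undefined + Cm M" by (simp add: abs_le_iff)
qed

lemma SEP2:
  fixes M :: "'k::finite \<Rightarrow> 'l::finite \<Rightarrow> 'a::finite \<Rightarrow> 'b::finite \<Rightarrow> real"
  assumes U: "Wgood U" and U': "Wgood U'"
    and V: "\<And>p \<nu>. dual2_val U M p \<nu> \<le> dual2_val U' M p \<nu> + e"
  shows "NDom U U' M e"
  unfolding NDom_def
proof (intro allI impI)
  fix \<pi> :: "'k pmf" and \<sigma> :: "'k \<Rightarrow> ('a \<times> 'b) list \<Rightarrow> 'a pmf" and \<delta> :: real
  assume \<delta>: "0 < \<delta>"
  define y where "y l = H U M (pmf \<pi>) \<sigma> l - e - \<delta>/2" for l
  define C where "C = {v :: real^'l. \<exists>\<sigma>'. \<forall>l. v$l \<le> H U' M (pmf \<pi>) \<sigma>' l}"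
  define z where "z = (\<chi> l. y l)"
  have convC: "convex C"
  proof (rule convexI)
    fix x1 x2 :: "real^'l" and u v :: real
    assume x1: "x1 \<in> C" and x2: "x2 \<in> C" and u: "0 \<le> u" and v: "0 \<le> v" and uv: "u + v = 1"
    obtain \<sigma>1 where \<sigma>1: "\<And>l. x1$l \<le> H U' M (pmf \<pi>) \<sigma>1 l" using x1 unfolding C_def by auto
    obtain \<sigma>2 where \<sigma>2: "\<And>l. x2$l \<le> H U' M (pmf \<pi>) \<sigma>2 l" using x2 unfolding C_def by auto
    have u1: "u \<le> 1" using v uv by simp
    have "\<forall>l. (u *\<^sub>R x1 + v *\<^sub>R x2)$l \<le> H U' M (pmf \<pi>) (\<lambda>k. mixS u (\<sigma>1 k) (\<sigma>2 k)) l"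
    proof
      fix l
      have "(u *\<^sub>R x1 + v *\<^sub>R x2)$l = u * x1$l + (1-u) * x2$l" using uv by simp
      also have "\<dots> \<le> u * H U' M (pmf \<pi>) \<sigma>1 l + (1-u) * H U' M (pmf \<pi>) \<sigma>2 l"
        using \<sigma>1[of l] \<sigma>2[of l] u u1 by (intro add_mono mult_left_mono) auto
      also have "\<dots> \<le> H U' M (pmf \<pi>) (\<lambda>k. mixS u (\<sigma>1 k) (\<sigma>2 k)) l" by (rule H_mix_same[OF U' u u1])
      finally show "(u *\<^sub>R x1 + v *\<^sub>R x2)$l \<le> H U' M (pmf \<pi>) (\<lambda>k. mixS u (\<sigma>1 k) (\<sigma>2 k)) l" .
    qed
    then show "u *\<^sub>R x1 + v *\<^sub>R x2 \<in> C" unfolding C_def by blast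
  qed
  have x0C: "(\<chi> l. H U' M (pmf \<pi>) \<sigma> l) \<in> C" unfolding C_def by auto
  have downC: "(\<chi> l. if l = l0 then x$l - s else x$l) \<in> C" if xC: "x \<in> C" and s0: "0 \<le> s" for x s l0
  proof -
    obtain \<sigma>' where \<sigma>': "\<And>l. x$l \<le> H U' M (pmf \<pi>) \<sigma>' l" using xC unfolding C_def by auto
    have "\<forall>l. (\<chi> l. if l = l0 then x$l - s else x$l)$l \<le> H U' M (pmf \<pi>) \<sigma>' l"
    proof
      fix l show "(\<chi> l. if l = l0 then x$l - s else x$l)$l \<le> H U' M (pmf \<pi>) \<sigma>' l"
        using \<sigma>'[of l] s0 by auto
    qed
    then show ?thesis unfolding C_def by blast
  qed
  have zC: "z \<in> closure C"
  proof (rule ccontr)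
    assume "z \<notin> closure C"
    then obtain a b where ab1: "inner a z < b" and ab2: "\<forall>x\<in>closure C. b < inner a x"
      using separating_hyperplane_closed_point[OF convex_closure[OF convC] closed_closure] by blast
    have abC: "\<And>x. x \<in> C \<Longrightarrow> b < inner a x" using ab2 closure_subset by blast
    have aneg: "\<And>l. a$l \<le> 0" by (rule sep_sign[OF x0C downC abC]) auto
    have anz: "a \<noteq> 0" using ab1 abC[OF x0C] by auto
    define N where "N = (\<Sum>l\<in>UNIV. - a$l)"
    have N: "0 < N" unfolding N_def by (rule pos_normalize[OF aneg anz])
    have f0: "\<And>l. 0 \<le> - a$l / N" using aneg N by (simp add: divide_nonpos_pos)
    have "(\<Sum>l\<in>UNIV. - a$l / N) = (\<Sum>l\<in>UNIV. - a$l) / N" by (rule sum_divide_distrib[symmetric])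
    then have f1: "(\<Sum>l\<in>UNIV. - a$l / N) = 1" using N unfolding N_def by simp
    obtain Q where Q: "pmf Q = (\<lambda>l. - a$l / N)"
      using simplex_pmf[of "\<lambda>l. - a$l / N", OF f0 f1] by blast
    have Qsum: "(\<Sum>l\<in>UNIV. pmf Q l * X l) = - inner a (\<chi> l. X l) / N" for X
      unfolding Q inner_vec_real by (simp add: sum_divide_distrib sum_negf)
    define \<nu> where "\<nu> l = - y l" for l
    have "dual2_val U' M \<pi> \<nu> \<le> - b / N - (\<Sum>l\<in>UNIV. pmf Q l * y l)"
      unfolding V2_repr
    proof (rule cSUP_least)
      fix \<sigma>'
      have "G2 U' M \<pi> \<nu> \<sigma>' = (\<Sum>l\<in>UNIV. pmf Q l * G2 U' M \<pi> \<nu> \<sigma>')"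
        by (simp add: sum_distrib_right[symmetric] sum_pmf_UNIV)
      also have "\<dots> \<le> (\<Sum>l\<in>UNIV. pmf Q l * (\<nu> l + H U' M (pmf \<pi>) \<sigma>' l))"
        by (intro sum_mono mult_left_mono G2_upper[OF U']) (simp add: pmf_nonneg)
      also have "\<dots> = - (\<Sum>l\<in>UNIV. pmf Q l * y l) + (\<Sum>l\<in>UNIV. pmf Q l * H U' M (pmf \<pi>) \<sigma>' l)"
        unfolding \<nu>_def by (simp add: right_diff_distrib sum_subtractf)
      also have "(\<Sum>l\<in>UNIV. pmf Q l * H U' M (pmf \<pi>) \<sigma>' l) \<le> - b / N"
      proof -
        have "(\<chi> l. H U' M (pmf \<pi>) \<sigma>' l) \<in> C" unfolding C_def by auto
        then have "b < inner a (\<chi> l. H U' M (pmf \<pi>) \<sigma>' l)" by (rule abC)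
        then show ?thesis unfolding Qsum using N by (simp add: divide_simps)
      qed
      finally show "G2 U' M \<pi> \<nu> \<sigma>' \<le> - b / N - (\<Sum>l\<in>UNIV. pmf Q l * y l)" by simp
    qed auto
    moreover have "e + \<delta>/2 \<le> dual2_val U M \<pi> \<nu>"
      unfolding V2_repr
    proof (rule cSUP_upper2[OF G2_bdd[OF U] UNIV_I])
      show "e + \<delta>/2 \<le> G2 U M \<pi> \<nu> \<sigma>"
        by (rule G2_lower[OF U]) (simp add: \<nu>_def y_def)
    qed
    moreover have "- b / N < (\<Sum>l\<in>UNIV. pmf Q l * y l)"
      using ab1 N unfolding Qsum z_def by (simp add: divide_simps)
    ultimately show False using V[of \<pi> \<nu>] \<delta> by linarith
  qed
  obtain c where c: "c \<in> C" "dist c z < \<delta>/2"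
    using zC \<delta> unfolding closure_approachable by (meson half_gt_zero)
  obtain \<sigma>1 where \<sigma>1: "\<And>l. c$l \<le> H U' M (pmf \<pi>) \<sigma>1 l" using c(1) unfolding C_def by auto
  show "\<exists>\<sigma>'. \<forall>l. H U M (pmf \<pi>) \<sigma> l - (e + \<delta>) \<le> H U' M (pmf \<pi>) \<sigma>' l"
  proof (intro exI allI)
    fix l
    have "dist (c$l) (z$l) < \<delta>/2" using dist_vec_nth_le[of c l z] c(2) by linarith
    then have "\<bar>c$l - y l\<bar> < \<delta>/2" by (simp add: z_def dist_real_def)
    then have "y l - \<delta>/2 \<le> c$l" using abs_less_iff[of "c$l - y l" "\<delta>/2"] by linarith
    then show "H U M (pmf \<pi>) \<sigma> l - (e + \<delta>) \<le> H U' M (pmf \<pi>) \<sigma>1 l"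
      using \<sigma>1[of l] unfolding y_def by linarith
  qed
qed

lemma G1_bdd: assumes W: "Wgood W" shows "bdd_above ((\<lambda>(\<pi>, \<sigma>). G1 W M \<mu> q \<pi> \<sigma>) ` UNIV)"
  by (rule bdd_aboveI2[where M="(\<Sum>k\<in>UNIV. \<bar>\<mu> k\<bar>) + Cm M"]) (auto simp: G1_bound[OF W])

lemma SEP1:
  fixes M :: "'k::finite \<Rightarrow> 'l::finite \<Rightarrow> 'a::finite \<Rightarrow> 'b::finite \<Rightarrow> real"
  assumes U: "Wgood U" and U': "Wgood U'"
    and V: "\<And>\<mu> q. dual1_val U M \<mu> q \<le> dual1_val U' M \<mu> q + e"
  shows "NDom U U' M e"
  unfolding NDom_def
proof (intro allI impI)
  fix \<pi>0 :: "'k pmf" and \<sigma> :: "'k \<Rightarrow> ('a \<times> 'b) list \<Rightarrow> 'a pmf" and \<delta> :: real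
  assume \<delta>: "0 < \<delta>"
  define r where "r = \<delta> / (2 * (1 + real CARD('k) * Cm M))"
  have den: "0 < 1 + real CARD('k) * Cm M" using Cm_nonneg[of M] by (simp add: add_pos_nonneg)
  have r: "0 < r" unfolding r_def using \<delta> den by simp
  have r2: "r * (1 + real CARD('k) * Cm M) = \<delta>/2"
  proof -
    have "r * (1 + real CARD('k) * Cm M) = (\<delta>/2) * ((1 + real CARD('k) * Cm M) / (1 + real CARD('k) * Cm M))"
      unfolding r_def by (simp add: field_simps)
    also have "(1 + real CARD('k) * Cm M) / (1 + real CARD('k) * Cm M) = 1" using den by simp
    finally show ?thesis by simp
  qed
  define y where "y l = H U M (pmf \<pi>0) \<sigma> l - e - \<delta>/2" for l
  define C where "C = {p :: (real^'k) \<times> (real^'l). \<exists>\<pi> \<sigma>'. fst p = (\<chi> k. pmf \<pi> k) \<and> (\<forall>l. snd p $ l \<le> H U' M (pmf \<pi>) \<sigma>' l)}"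
  define v0 where "v0 = (\<chi> k. pmf \<pi>0 k)"
  define z where "z = (v0, (\<chi> l. y l))"
  have convC: "convex C"
  proof (rule convexI)
    fix p1 p2 :: "(real^'k) \<times> (real^'l)" and u v :: real
    assume p1: "p1 \<in> C" and p2: "p2 \<in> C" and u: "0 \<le> u" and v: "0 \<le> v" and uv: "u + v = 1"
    obtain v1 x1 v2 x2 where pp: "p1 = (v1, x1)" "p2 = (v2, x2)" by (cases p1, cases p2) auto
    obtain \<pi>1 \<sigma>1 where 1: "v1 = (\<chi> k. pmf \<pi>1 k)" "\<And>l. x1$l \<le> H U' M (pmf \<pi>1) \<sigma>1 l"
      using p1 unfolding pp C_def by auto
    obtain \<pi>2 \<sigma>2 where 2: "v2 = (\<chi> k. pmf \<pi>2 k)" "\<And>l. x2$l \<le> H U' M (pmf \<pi>2) \<sigma>2 l"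
      using p2 unfolding pp C_def by auto
    have u1: "u \<le> 1" using v uv by simp
    have vv: "v = 1 - u" using uv by simp
    have e1: "u *\<^sub>R v1 + v *\<^sub>R v2 = (\<chi> k. pmf (mixP u \<pi>1 \<pi>2) k)"
      unfolding 1 2 vv by (simp add: vec_eq_iff pmf_mixP[OF u u1])
    have e2: "\<forall>l. (u *\<^sub>R x1 + v *\<^sub>R x2)$l \<le> H U' M (pmf (mixP u \<pi>1 \<pi>2)) (\<lambda>k. mixS (mixw u \<pi>1 \<pi>2 k) (\<sigma>1 k) (\<sigma>2 k)) l"
    proof
      fix l
      have "(u *\<^sub>R x1 + v *\<^sub>R x2)$l = u * x1$l + (1-u) * x2$l" using vv by simp
      also have "\<dots> \<le> u * H U' M (pmf \<pi>1) \<sigma>1 l + (1-u) * H U' M (pmf \<pi>2) \<sigma>2 l"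
        using 1(2)[of l] 2(2)[of l] u u1 by (intro add_mono mult_left_mono) auto
      also have "\<dots> \<le> H U' M (pmf (mixP u \<pi>1 \<pi>2)) (\<lambda>k. mixS (mixw u \<pi>1 \<pi>2 k) (\<sigma>1 k) (\<sigma>2 k)) l"
        by (rule H_mix[OF U' u u1])
      finally show "(u *\<^sub>R x1 + v *\<^sub>R x2)$l \<le> H U' M (pmf (mixP u \<pi>1 \<pi>2)) (\<lambda>k. mixS (mixw u \<pi>1 \<pi>2 k) (\<sigma>1 k) (\<sigma>2 k)) l" .
    qed
    show "u *\<^sub>R p1 + v *\<^sub>R p2 \<in> C"
      unfolding pp C_def using e1 e2 by auto
  qed
  define C2 where "C2 = {x. (v0, x) \<in> C}"
  have x0C: "(\<chi> l. H U' M (pmf \<pi>0) \<sigma> l) \<in> C2" unfolding C2_def C_def v0_def by auto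
  have downC: "(\<chi> l. if l = l0 then x$l - s else x$l) \<in> C2" if xC: "x \<in> C2" and s0: "0 \<le> s" for x s l0
  proof -
    obtain \<pi> \<sigma>' where \<sigma>': "v0 = (\<chi> k. pmf \<pi> k)" "\<And>l. x$l \<le> H U' M (pmf \<pi>) \<sigma>' l"
      using xC unfolding C2_def C_def by auto
    have "\<forall>l. (\<chi> l. if l = l0 then x$l - s else x$l)$l \<le> H U' M (pmf \<pi>) \<sigma>' l"
    proof
      fix l show "(\<chi> l. if l = l0 then x$l - s else x$l)$l \<le> H U' M (pmf \<pi>) \<sigma>' l"
        using \<sigma>'(2)[of l] s0 by auto
    qed
    then have A: "\<forall>l. (\<chi> l. if l = l0 then x$l - s else x$l)$l \<le> H U' M (pmf \<pi>) \<sigma>' l" .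
    show ?thesis unfolding C2_def C_def mem_Collect_eq fst_conv snd_conv
      by (rule exI[of _ \<pi>], rule exI[of _ \<sigma>'], rule conjI[OF \<sigma>'(1) A])
  qed
  have zC: "z \<in> closure C"
  proof (rule ccontr)
    assume "z \<notin> closure C"
    then obtain a b where ab1: "inner a z < b" and ab2: "\<forall>x\<in>closure C. b < inner a x"
      using separating_hyperplane_closed_point[OF convex_closure[OF convC] closed_closure] by blast
    obtain a1 a2 where aa: "a = (a1, a2)" by (cases a)
    have abC: "\<And>v x. (v, x) \<in> C \<Longrightarrow> b < inner a1 v + inner a2 x" using ab2 closure_subset aa by fastforce
    have abC2: "\<And>x. x \<in> C2 \<Longrightarrow> b - inner a1 v0 < inner a2 x" using abC unfolding C2_def by fastforce
    have aneg: "\<And>l. a2$l \<le> 0" by (rule sep_sign[OF x0C downC abC2]) auto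
    have anz: "a2 \<noteq> 0" using ab1 abC2[OF x0C] unfolding aa z_def by auto
    define N where "N = (\<Sum>l\<in>UNIV. - a2$l)"
    have N: "0 < N" unfolding N_def by (rule pos_normalize[OF aneg anz])
    have f0: "\<And>l. 0 \<le> - a2$l / N" using aneg N by (simp add: divide_nonpos_pos)
    have "(\<Sum>l\<in>UNIV. - a2$l / N) = (\<Sum>l\<in>UNIV. - a2$l) / N" by (rule sum_divide_distrib[symmetric])
    then have f1: "(\<Sum>l\<in>UNIV. - a2$l / N) = 1" using N unfolding N_def by simp
    obtain Q where Q: "pmf Q = (\<lambda>l. - a2$l / N)"
      using simplex_pmf[of "\<lambda>l. - a2$l / N", OF f0 f1] by blast
    have Qsum: "(\<Sum>l\<in>UNIV. pmf Q l * X l) = - inner a2 (\<chi> l. X l) / N" for X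
      unfolding Q inner_vec_real by (simp add: sum_divide_distrib sum_negf)
    define \<mu> where "\<mu> k = - a1$k / N" for k
    have musum: "(\<Sum>k\<in>UNIV. pmf \<pi> k * \<mu> k) = - inner a1 (\<chi> k. pmf \<pi> k) / N" for \<pi> :: "'k pmf"
      unfolding \<mu>_def inner_vec_real by (simp add: sum_divide_distrib sum_negf mult_ac)
    have "dual1_val U' M \<mu> Q \<le> - b / N"
      unfolding V1_repr[OF U']
    proof (rule cSUP_least)
      fix pp :: "'k pmf \<times> ('k \<Rightarrow> ('a \<times> 'b) list \<Rightarrow> 'a pmf)"
      obtain \<pi> \<sigma>' where pp: "pp = (\<pi>, \<sigma>')" by (cases pp)
      have "((\<chi> k. pmf \<pi> k), (\<chi> l. H U' M (pmf \<pi>) \<sigma>' l)) \<in> C" unfolding C_def by auto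
      then have "b < inner a1 (\<chi> k. pmf \<pi> k) + inner a2 (\<chi> l. H U' M (pmf \<pi>) \<sigma>' l)" by (rule abC)
      then have "G1 U' M \<mu> Q \<pi> \<sigma>' \<le> - b / N"
        unfolding G1_def musum Qsum using N by (simp add: divide_simps)
      then show "(case pp of (\<pi>, \<sigma>) \<Rightarrow> G1 U' M \<mu> Q \<pi> \<sigma>) \<le> - b / N" by (simp add: pp)
    qed auto
    moreover have "- b / N + e + \<delta>/2 < dual1_val U M \<mu> Q"
    proof -
      have "G1 U M \<mu> Q \<pi>0 \<sigma> = (\<Sum>k\<in>UNIV. pmf \<pi>0 k * \<mu> k) + (\<Sum>l\<in>UNIV. pmf Q l * (y l + (e + \<delta>/2)))"
        unfolding G1_def y_def by simp
      also have "\<dots> = (\<Sum>k\<in>UNIV. pmf \<pi>0 k * \<mu> k) + (\<Sum>l\<in>UNIV. pmf Q l * y l) + (\<Sum>l\<in>UNIV. pmf Q l) * (e + \<delta>/2)"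
        by (simp only: distrib_left sum.distrib sum_distrib_right[symmetric] add.assoc)
      also have "(\<Sum>l\<in>UNIV. pmf Q l) = 1" by (rule sum_pmf_UNIV)
      also have "(\<Sum>k\<in>UNIV. pmf \<pi>0 k * \<mu> k) + (\<Sum>l\<in>UNIV. pmf Q l * y l) = - inner a z / N"
        unfolding musum Qsum aa z_def v0_def by (simp add: diff_divide_distrib)
      finally have g: "G1 U M \<mu> Q \<pi>0 \<sigma> = - inner a z / N + (e + \<delta>/2)" by simp
      have "- b / N < - inner a z / N" using ab1 N by (simp add: divide_simps)
      also have "G1 U M \<mu> Q \<pi>0 \<sigma> \<le> dual1_val U M \<mu> Q"
        unfolding V1_repr[OF U] using cSUP_upper[OF _ G1_bdd[OF U], of "(\<pi>0, \<sigma>)"] by simp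
      ultimately show ?thesis using g by linarith
    qed
    ultimately show False using V[of \<mu> Q] \<delta> by linarith
  qed
  obtain c where c: "c \<in> C" "dist c z < r"
    using zC r unfolding closure_approachable by blast
  obtain vc xc where cc: "c = (vc, xc)" by (cases c)
  obtain \<pi>1 \<sigma>1 where \<sigma>1: "vc = (\<chi> k. pmf \<pi>1 k)" "\<And>l. xc$l \<le> H U' M (pmf \<pi>1) \<sigma>1 l"
    using c(1) unfolding cc C_def by auto
  have dk: "\<bar>pmf \<pi>0 k - pmf \<pi>1 k\<bar> \<le> r" for k
  proof -
    have "dist (vc$k) (v0$k) \<le> dist vc v0" by (rule dist_vec_nth_le)
    also have "dist vc v0 \<le> dist c z" using dist_fst_le[of c z] unfolding cc z_def by simp
    finally show ?thesis using c(2) unfolding \<sigma>1(1) v0_def by (simp add: dist_real_def abs_minus_commute)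
  qed
  have dl: "y l - r \<le> xc$l" for l
  proof -
    have "dist (xc$l) ((\<chi> l. y l)$l) \<le> dist xc (\<chi> l. y l)" by (rule dist_vec_nth_le)
    also have "dist xc (\<chi> l. y l) \<le> dist c z" using dist_snd_le[of c z] unfolding cc z_def by simp
    finally have "\<bar>xc$l - y l\<bar> < r" using c(2) by (simp add: dist_real_def)
    then show ?thesis using abs_less_iff[of "xc$l - y l" r] by linarith
  qed
  show "\<exists>\<sigma>'. \<forall>l. H U M (pmf \<pi>0) \<sigma> l - (e + \<delta>) \<le> H U' M (pmf \<pi>0) \<sigma>' l"
  proof (intro exI allI)
    fix l
    have s: "(\<Sum>k\<in>UNIV. \<bar>pmf \<pi>0 k - pmf \<pi>1 k\<bar>) * Cm M \<le> real CARD('k) * r * Cm M"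
      using sum_mono[of UNIV "\<lambda>k. \<bar>pmf \<pi>0 k - pmf \<pi>1 k\<bar>" "\<lambda>k. r", OF dk] Cm_nonneg[of M]
      by (intro mult_right_mono) auto
    have "H U' M (pmf \<pi>1) \<sigma>1 l - (\<Sum>k\<in>UNIV. \<bar>pmf \<pi>0 k - pmf \<pi>1 k\<bar>) * Cm M \<le> H U' M (pmf \<pi>0) \<sigma>1 l"
      by (rule H_lip[OF U'])
    then show "H U M (pmf \<pi>0) \<sigma> l - (e + \<delta>) \<le> H U' M (pmf \<pi>0) \<sigma>1 l"
      using s \<sigma>1(2)[of l] dl[of l] r2 unfolding y_def by (simp add: algebra_simps)
  qed
qed

lemma Dom_triv:
  fixes M :: "'k::finite \<Rightarrow> 'l::finite \<Rightarrow> 'a::finite \<Rightarrow> 'b::finite \<Rightarrow> real"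
  assumes W: "Wgood W" and W': "Wgood W'"
  shows "Dom W W' M (2 * Cm M)"
  unfolding Dom_def
proof (intro allI impI exI)
  fix w :: "'k \<Rightarrow> real" and \<sigma> and \<delta> :: real and l
  assume w: "\<forall>k. 0 \<le> w k" and \<delta>: "0 < \<delta>"
  have sa: "(\<Sum>k\<in>UNIV. \<bar>w k\<bar>) = sum w UNIV" using w by simp
  have s0: "0 \<le> sum w UNIV" using w by (simp add: sum_nonneg)
  have 1: "H W M w \<sigma> l \<le> sum w UNIV * Cm M" using H_bound[OF W, of M w \<sigma> l] sa by (simp add: abs_le_iff)
  have 2: "- (sum w UNIV * Cm M) \<le> H W' M w \<sigma> l" using H_bound[OF W', of M w \<sigma> l] sa by (simp add: abs_le_iff)
  have 3: "0 \<le> \<delta> * sum w UNIV" using \<delta> s0 by simp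
  show "H W M w \<sigma> l - (2 * Cm M + \<delta>) * sum w UNIV \<le> H W' M w \<sigma> l"
    using 1 2 3 by (simp add: algebra_simps)
qed

lemma final_gen1:
  fixes M :: "'k::finite \<Rightarrow> 'l::finite \<Rightarrow> 'a::finite \<Rightarrow> 'b::finite \<Rightarrow> real"
  assumes U: "Wgood U" and U': "Wgood U'" and W: "Wgood W" and W': "Wgood W'"
    and DW: "Wdec lam W U" and DW': "Wdec lam W' U'" and lam: "0 < lam" "lam < 1"
  shows "supnorm (\<lambda>\<mu> q. dual1_val W M \<mu> q - dual1_val W' M \<mu> q)
     \<le> (1 - lam) * supnorm (\<lambda>\<mu> q. dual1_val U M \<mu> q - dual1_val U' M \<mu> q)"
proof -
  define e where "e = supnorm (\<lambda>\<mu> q. dual1_val U M \<mu> q - dual1_val U' M \<mu> q)"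
  have b1: "dual1_val U M \<mu> q \<le> dual1_val U' M \<mu> q + 2 * Cm M" for \<mu> q
    by (rule Dom_V1[OF U U' Dom_triv[OF U U']])
  have b2: "dual1_val U' M \<mu> q \<le> dual1_val U M \<mu> q + 2 * Cm M" for \<mu> q
    by (rule Dom_V1[OF U' U Dom_triv[OF U' U]])
  have bdd: "bdd_above ((\<lambda>(\<mu>, q). \<bar>dual1_val U M \<mu> q - dual1_val U' M \<mu> q\<bar>) ` UNIV)"
  proof (rule bdd_aboveI2[where M="2 * Cm M"])
    fix x :: "('k \<Rightarrow> real) \<times> 'l pmf"
    obtain \<mu> q where x: "x = (\<mu>, q)" by (cases x)
    show "(case x of (\<mu>, q) \<Rightarrow> \<bar>dual1_val U M \<mu> q - dual1_val U' M \<mu> q\<bar>) \<le> 2 * Cm M"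
      using b1[of \<mu> q] b2[of \<mu> q] unfolding x by (simp add: abs_le_iff)
  qed
  have pt: "\<bar>dual1_val U M \<mu> q - dual1_val U' M \<mu> q\<bar> \<le> e" for \<mu> q
    unfolding e_def supnorm_def using cSUP_upper[OF UNIV_I bdd, of "(\<mu>, q)"] by simp
  have v1: "dual1_val U M \<mu> q \<le> dual1_val U' M \<mu> q + e" for \<mu> q
    using abs_le_D1[OF pt[of \<mu> q]] by simp
  have v2: "dual1_val U' M \<mu> q \<le> dual1_val U M \<mu> q + e" for \<mu> q
    using abs_le_D2[OF pt[of \<mu> q]] by simp
  have D1: "Dom U U' M e" by (rule NDom_Dom[OF U U' SEP1[OF U U' v1]])
  have D2: "Dom U' U M e" by (rule NDom_Dom[OF U' U SEP1[OF U' U v2]])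
  have E1: "Dom W W' M ((1-lam) * e)" by (rule CL[OF U U' W W' DW DW' lam D1])
  have E2: "Dom W' W M ((1-lam) * e)" by (rule CL[OF U' U W' W DW' DW lam D2])
  show ?thesis
    unfolding e_def[symmetric] supnorm_def
  proof (rule cSUP_least)
    fix x :: "('k \<Rightarrow> real) \<times> 'l pmf"
    obtain \<mu> q where x: "x = (\<mu>, q)" by (cases x)
    show "(case x of (\<mu>, q) \<Rightarrow> \<bar>dual1_val W M \<mu> q - dual1_val W' M \<mu> q\<bar>) \<le> (1 - lam) * e"
      using Dom_V1[OF W W' E1, of \<mu> q] Dom_V1[OF W' W E2, of \<mu> q] unfolding x by (simp add: abs_le_iff)
  qed auto
qed

lemma final_gen2:
  fixes M :: "'k::finite \<Rightarrow> 'l::finite \<Rightarrow> 'a::finite \<Rightarrow> 'b::finite \<Rightarrow> real"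
  assumes U: "Wgood U" and U': "Wgood U'" and W: "Wgood W" and W': "Wgood W'"
    and DW: "Wdec lam W U" and DW': "Wdec lam W' U'" and lam: "0 < lam" "lam < 1"
  shows "supnorm (\<lambda>p \<nu>. dual2_val W M p \<nu> - dual2_val W' M p \<nu>)
     \<le> (1 - lam) * supnorm (\<lambda>p \<nu>. dual2_val U M p \<nu> - dual2_val U' M p \<nu>)"
proof -
  define e where "e = supnorm (\<lambda>p \<nu>. dual2_val U M p \<nu> - dual2_val U' M p \<nu>)"
  have b1: "dual2_val U M p \<nu> \<le> dual2_val U' M p \<nu> + 2 * Cm M" for p \<nu>
    by (rule Dom_V2[OF U U' Dom_triv[OF U U']])
  have b2: "dual2_val U' M p \<nu> \<le> dual2_val U M p \<nu> + 2 * Cm M" for p \<nu>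
    by (rule Dom_V2[OF U' U Dom_triv[OF U' U]])
  have bdd: "bdd_above ((\<lambda>(p, \<nu>). \<bar>dual2_val U M p \<nu> - dual2_val U' M p \<nu>\<bar>) ` UNIV)"
  proof (rule bdd_aboveI2[where M="2 * Cm M"])
    fix x :: "'k pmf \<times> ('l \<Rightarrow> real)"
    obtain p \<nu> where x: "x = (p, \<nu>)" by (cases x)
    show "(case x of (p, \<nu>) \<Rightarrow> \<bar>dual2_val U M p \<nu> - dual2_val U' M p \<nu>\<bar>) \<le> 2 * Cm M"
      using b1[of p \<nu>] b2[of p \<nu>] unfolding x by (simp add: abs_le_iff)
  qed
  have pt: "\<bar>dual2_val U M p \<nu> - dual2_val U' M p \<nu>\<bar> \<le> e" for p \<nu>
    unfolding e_def supnorm_def using cSUP_upper[OF UNIV_I bdd, of "(p, \<nu>)"] by simp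
  have v1: "dual2_val U M p \<nu> \<le> dual2_val U' M p \<nu> + e" for p \<nu>
    using abs_le_D1[OF pt[of p \<nu>]] by simp
  have v2: "dual2_val U' M p \<nu> \<le> dual2_val U M p \<nu> + e" for p \<nu>
    using abs_le_D2[OF pt[of p \<nu>]] by simp
  have D1: "Dom U U' M e" by (rule NDom_Dom[OF U U' SEP2[OF U U' v1]])
  have D2: "Dom U' U M e" by (rule NDom_Dom[OF U' U SEP2[OF U' U v2]])
  have E1: "Dom W W' M ((1-lam) * e)" by (rule CL[OF U U' W W' DW DW' lam D1])
  have E2: "Dom W' W M ((1-lam) * e)" by (rule CL[OF U' U W' W DW' DW lam D2])
  show ?thesis
    unfolding e_def[symmetric] supnorm_def
  proof (rule cSUP_least)
    fix x :: "'k pmf \<times> ('l \<Rightarrow> real)"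
    obtain p \<nu> where x: "x = (p, \<nu>)" by (cases x)
    show "(case x of (p, \<nu>) \<Rightarrow> \<bar>dual2_val W M p \<nu> - dual2_val W' M p \<nu>\<bar>) \<le> (1 - lam) * e"
      using Dom_V2[OF W W' E1, of p \<nu>] Dom_V2[OF W' W E2, of p \<nu>] unfolding x by (simp add: abs_le_iff)
  qed auto
qed

theorem theorem4:
  fixes M :: "'k::finite \<Rightarrow> 'l::finite \<Rightarrow> 'a::finite \<Rightarrow> 'b::finite \<Rightarrow> real"
    and lam :: real and T :: nat
  assumes "0 < lam" and "lam < 1"
  shows "supnorm (\<lambda>\<mu> q. V1 lam M \<mu> q - V1T lam (T + 1) M \<mu> q)
           \<le> (1 - lam) * supnorm (\<lambda>\<mu> q. V1 lam M \<mu> q - V1T lam T M \<mu> q)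
       \<and> supnorm (\<lambda>p \<nu>. V2 lam M p \<nu> - V2T lam (T + 1) M p \<nu>)
           \<le> (1 - lam) * supnorm (\<lambda>p \<nu>. V2 lam M p \<nu> - V2T lam T M p \<nu>)"
proof -
  have g1: "Wgood (disc_total lam)" by (rule Wgood_disc[OF assms])
  have g2: "Wgood (trunc_total lam T)" by (rule Wgood_trunc[OF assms])
  have g3: "Wgood (trunc_total lam (Suc T))" by (rule Wgood_trunc[OF assms])
  have d1: "Wdec lam (disc_total lam) (disc_total lam)" by (rule Wdec_disc[OF assms])
  have d2: "Wdec lam (trunc_total lam (Suc T)) (trunc_total lam T)" by (rule Wdec_trunc)
  show ?thesis
    unfolding V1_def V1T_def V2_def V2T_def Suc_eq_plus1[symmetric]
    using final_gen1[OF g1 g2 g1 g3 d1 d2 assms, of M] final_gen2[OF g1 g2 g1 g3 d1 d2 assms, of M]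
    by simp
qed


end
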